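(* The sectional curvature of $\mathrm{SU}(n,1)$ with respect to the metric $\tilde g$ at the planes spanned by standard basis elements is bounded above by $1/4$.
   Context: $\mathrm{SU}(n,1)$ is the indefinite special unitary group, with Lie algebra $\mathfrak{su}(n,1)=\{X : JX^*J=-X,\ \operatorname{tr}X=0\}$, $J=\mathrm{diag}(1,\dots,1,-1)$. With $e_{jk}$ the elementary matrices, $\alpha_{jk}=e_{jk}-e_{kj}$, $\beta_{jk}=e_{jk}+e_{kj}$, $h_j=i(e_{jj}-e_{n+1,n+1})$, the standard basis of $\mathfrak{su}(n,1)$ consists of $\alpha_{jk}, i\beta_{jk}$ ($1\le j<k\le n$), $\beta_{j,n+1}, i\alpha_{j,n+1}$, $h_j$ ($1\le j\le n$). The Cartan decomposition is $\mathfrak k=\mathrm{span}\{\alpha_{jk},i\beta_{jk},h_j\}$, $\mathfrak p=\mathrm{span}\{\beta_{j,n+1},i\alpha_{j,n+1}\}$. The canonical metric $g$ is the left-invariant metric given by $B$ on $\mathfrak p$, $-B$ on $\mathfrak k$, and $\mathfrak k\perp\mathfrak p$, where $B(X,Y)=\operatorname{tr}(\operatorname{ad}X\operatorname{ad}Y)$ is the Killing form; in it the standard basis is orthogonal with each element of squared norm $4n+4$. The metric $\tilde g=\frac{1}{n+1}g$, so standard basis elements have squared norm $4$. *)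

theory Defs
  imports Complex_Main "HOL-Library.Function_Algebras"
begin

text \<open>Complex (n+1)x(n+1) matrices are represented as functions nat => nat => complex,
  with 0-based indices 0..n (index n plays the role of the paper's index n+1),
  and entries outside {0..n} x {0..n} equal to 0.  Addition, subtraction and negation are
  pointwise (Function_Algebras).\<close>

type_synonym cmat = "nat \<Rightarrow> nat \<Rightarrow> complex"

definition supported :: "nat \<Rightarrow> cmat \<Rightarrow> bool" where
  "supported n A \<longleftrightarrow> (\<forall>i j. (n < i \<or> n < j) \<longrightarrow> A i j = 0)"

definition mmul :: "nat \<Rightarrow> cmat \<Rightarrow> cmat \<Rightarrow> cmat" where
  "mmul n A B = (\<lambda>i j. if i \<le> n \<and> j \<le> n then (\<Sum>k\<le>n. A i k * B k j) else 0)"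

definition ctr :: "cmat \<Rightarrow> cmat" where
  "ctr A = (\<lambda>i j. cnj (A j i))"

definition mtrace :: "nat \<Rightarrow> cmat \<Rightarrow> complex" where
  "mtrace n A = (\<Sum>i\<le>n. A i i)"

definition smul :: "complex \<Rightarrow> cmat \<Rightarrow> cmat" where
  "smul c A = (\<lambda>i j. c * A i j)"

definition Jmat :: "nat \<Rightarrow> cmat" where
  "Jmat n = (\<lambda>i j. if i = j \<and> i \<le> n then (if i = n then -1 else 1) else 0)"

definition su :: "nat \<Rightarrow> cmat set" where
  "su n = {X. supported n X \<and> mmul n (mmul n (Jmat n) (ctr X)) (Jmat n) = - X \<and> mtrace n X = 0}"

text \<open>Lie bracket of left-invariant vector fields on a matrix group: the commutator.\<close>
definition bracket :: "nat \<Rightarrow> cmat \<Rightarrow> cmat \<Rightarrow> cmat" where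
  "bracket n X Y = mmul n X Y - mmul n Y X"

text \<open>Elementary matrix e_{jk}, with the paper's 1-based indices j,k in {1..n+1}.\<close>
definition elem :: "nat \<Rightarrow> nat \<Rightarrow> cmat" where
  "elem j k = (\<lambda>a b. if a = j - 1 \<and> b = k - 1 then 1 else 0)"

definition alpha :: "nat \<Rightarrow> nat \<Rightarrow> cmat" where
  "alpha j k = elem j k - elem k j"

definition beta :: "nat \<Rightarrow> nat \<Rightarrow> cmat" where
  "beta j k = elem j k + elem k j"

definition hvec :: "nat \<Rightarrow> nat \<Rightarrow> cmat" where
  "hvec n j = smul \<i> (elem j j - elem (n+1) (n+1))"

definition kbasis :: "nat \<Rightarrow> cmat set" where
  "kbasis n = {alpha j k | j k. 1 \<le> j \<and> j < k \<and> k \<le> n}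
            \<union> {smul \<i> (beta j k) | j k. 1 \<le> j \<and> j < k \<and> k \<le> n}
            \<union> {hvec n j | j. 1 \<le> j \<and> j \<le> n}"

definition pbasis :: "nat \<Rightarrow> cmat set" where
  "pbasis n = {beta j (n+1) | j. 1 \<le> j \<and> j \<le> n}
            \<union> {smul \<i> (alpha j (n+1)) | j. 1 \<le> j \<and> j \<le> n}"

definition std_basis :: "nat \<Rightarrow> cmat set" where
  "std_basis n = kbasis n \<union> pbasis n"

definition coord :: "nat \<Rightarrow> cmat \<Rightarrow> cmat \<Rightarrow> real" where
  "coord n Z E = (THE r. \<exists>c. (\<forall>F. F \<notin> std_basis n \<longrightarrow> c F = 0)
                        \<and> Z = (\<Sum>F\<in>std_basis n. smul (complex_of_real (c F)) F) \<and> r = c E)"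

text \<open>Killing form B(X,Y) = tr(ad X ad Y), the trace of the real-linear endomorphism
  ad X o ad Y of su(n,1), computed in the standard basis.\<close>
definition killing :: "nat \<Rightarrow> cmat \<Rightarrow> cmat \<Rightarrow> real" where
  "killing n X Y = (\<Sum>E\<in>std_basis n. coord n (bracket n X (bracket n Y E)) E)"

definition kpart :: "nat \<Rightarrow> cmat \<Rightarrow> cmat" where
  "kpart n X = (\<Sum>E\<in>kbasis n. smul (complex_of_real (coord n X E)) E)"

definition ppart :: "nat \<Rightarrow> cmat \<Rightarrow> cmat" where
  "ppart n X = (\<Sum>E\<in>pbasis n. smul (complex_of_real (coord n X E)) E)"

definition gcan :: "nat \<Rightarrow> cmat \<Rightarrow> cmat \<Rightarrow> real" where
  "gcan n X Y = killing n (ppart n X) (ppart n Y) - killing n (kpart n X) (kpart n Y)"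

definition gt :: "nat \<Rightarrow> cmat \<Rightarrow> cmat \<Rightarrow> real" where
  "gt n X Y = gcan n X Y / real (n + 1)"

text \<open>Levi-Civita connection of the left-invariant metric g~ on left-invariant fields,
  characterised by the Koszul formula
  2 g(nabla_X Y, W) = g([X,Y],W) - g([Y,W],X) + g([W,X],Y).\<close>
definition nabla :: "nat \<Rightarrow> cmat \<Rightarrow> cmat \<Rightarrow> cmat" where
  "nabla n X Y = (THE Z. Z \<in> su n \<and> (\<forall>W\<in>su n.
      2 * gt n Z W = gt n (bracket n X Y) W - gt n (bracket n Y W) X + gt n (bracket n W X) Y))"

definition curv :: "nat \<Rightarrow> cmat \<Rightarrow> cmat \<Rightarrow> cmat \<Rightarrow> cmat" where
  "curv n X Y Z = nabla n X (nabla n Y Z) - nabla n Y (nabla n X Z) - nabla n (bracket n X Y) Z"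

definition sec_curv :: "nat \<Rightarrow> cmat \<Rightarrow> cmat \<Rightarrow> real" where
  "sec_curv n X Y = gt n (curv n X Y Y) X / (gt n X X * gt n Y Y - (gt n X Y)\<^sup>2)"

end

theory Submission
  imports Defs
begin


definition sg :: "nat \<Rightarrow> nat \<Rightarrow> complex" where
  "sg n a = (if a = n then -1 else 1)"

lemma sg_sq[simp]: "sg n a * sg n a = 1"
  by (simp add: sg_def)

lemma mmul_J_right: "mmul n A (Jmat n) a b = (if a \<le> n \<and> b \<le> n then A a b * sg n b else 0)"
proof -
  have "(\<Sum>k\<le>n. A a k * (if k = b \<and> k \<le> n then (if k = n then -1 else 1) else 0)) =
        (\<Sum>k\<le>n. (if k = b then A a k * sg n k else 0))"
    by (rule sum.cong) (auto simp: sg_def)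
  also have "\<dots> = (if b \<le> n then A a b * sg n b else 0)"
    by (simp add: sum.delta)
  finally have s: "(\<Sum>k\<le>n. A a k * (if k = b \<and> k \<le> n then (if k = n then -1 else 1) else 0)) = (if b \<le> n then A a b * sg n b else 0)" .
  show ?thesis unfolding mmul_def Jmat_def by (simp only: s) auto
qed

lemma mmul_J_left: "mmul n (Jmat n) A a b = (if a \<le> n \<and> b \<le> n then sg n a * A a b else 0)"
proof -
  have "(\<Sum>k\<le>n. (if a = k \<and> a \<le> n then (if a = n then -1 else 1) else 0) * A k b) =
        (\<Sum>k\<le>n. (if k = a then sg n k * A k b else 0))"
    by (rule sum.cong) (auto simp: sg_def)
  also have "\<dots> = (if a \<le> n then sg n a * A a b else 0)"
    by (simp add: sum.delta)
  finally have s: "(\<Sum>k\<le>n. (if a = k \<and> a \<le> n then (if a = n then -1 else 1) else 0) * A k b) = (if a \<le> n then sg n a * A a b else 0)" .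
  show ?thesis unfolding mmul_def Jmat_def by (simp only: s) auto
qed

definition sucond :: "nat \<Rightarrow> cmat \<Rightarrow> bool" where
  "sucond n X \<longleftrightarrow> (\<forall>a\<le>n. \<forall>b\<le>n. X a b = - (sg n a * sg n b) * cnj (X b a))"

lemma su_iff: "X \<in> su n \<longleftrightarrow> supported n X \<and> sucond n X \<and> (\<Sum>a\<le>n. X a a) = 0"
proof -
  have e: "mmul n (mmul n (Jmat n) (ctr X)) (Jmat n) a b =
     (if a \<le> n \<and> b \<le> n then sg n a * cnj (X b a) * sg n b else 0)" for a b
    by (simp add: mmul_J_right mmul_J_left ctr_def)
  have "(mmul n (mmul n (Jmat n) (ctr X)) (Jmat n) = - X) \<longleftrightarrow>
        (\<forall>a b. (if a \<le> n \<and> b \<le> n then sg n a * cnj (X b a) * sg n b else 0) = - X a b)"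
    by (auto simp: fun_eq_iff e)
  moreover have "supported n X \<Longrightarrow> (\<forall>a b. (if a \<le> n \<and> b \<le> n then sg n a * cnj (X b a) * sg n b else 0) = - X a b)
      \<longleftrightarrow> sucond n X"
  proof
    assume s: "supported n X" and h: "\<forall>a b. (if a \<le> n \<and> b \<le> n then sg n a * cnj (X b a) * sg n b else 0) = - X a b"
    show "sucond n X" unfolding sucond_def
    proof (intro allI impI)
      fix a b assume "a \<le> n" "b \<le> n"
      then have "sg n a * cnj (X b a) * sg n b = - X a b" using h[rule_format, of a b] by simp
      then show "X a b = - (sg n a * sg n b) * cnj (X b a)" by (simp add: algebra_simps)
    qed
  next
    assume s: "supported n X" and h: "sucond n X"
    show "\<forall>a b. (if a \<le> n \<and> b \<le> n then sg n a * cnj (X b a) * sg n b else 0) = - X a b"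
    proof (intro allI)
      fix a b
      show "(if a \<le> n \<and> b \<le> n then sg n a * cnj (X b a) * sg n b else 0) = - X a b"
      proof (cases "a \<le> n \<and> b \<le> n")
        case True
        then have "X a b = - (sg n a * sg n b) * cnj (X b a)" using h unfolding sucond_def by blast
        then show ?thesis using True by (simp add: algebra_simps)
      next
        case False
        then show ?thesis using s unfolding supported_def by auto
      qed
    qed
  qed
  ultimately show ?thesis unfolding su_def mtrace_def by blast
qed

definition off :: "nat \<Rightarrow> nat \<Rightarrow> nat \<Rightarrow> complex \<Rightarrow> cmat" where
  "off n a b u = (\<lambda>x y. if x = a \<and> y = b then u else if x = b \<and> y = a then - sg n b * cnj u else 0)"

definition hd :: "nat \<Rightarrow> nat \<Rightarrow> cmat" where
  "hd n a = (\<lambda>x y. if x = a \<and> y = a then \<i> else if x = n \<and> y = n then - \<i> else 0)"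

definition tv :: "bool \<Rightarrow> complex" where
  "tv t = (if t then \<i> else 1)"

definition bas :: "nat \<Rightarrow> nat \<times> nat \<times> bool \<Rightarrow> cmat" where
  "bas n i = (case i of (a, b, t) \<Rightarrow> if a = b then hd n a else off n a b (tv t))"

definition idx :: "nat \<Rightarrow> (nat \<times> nat \<times> bool) set" where
  "idx n = {(a, b, t). a < b \<and> b \<le> n} \<union> {(a, b, t). a = b \<and> a < n \<and> t}"

definition idxk :: "nat \<Rightarrow> (nat \<times> nat \<times> bool) set" where
  "idxk n = {(a, b, t). a < b \<and> b < n} \<union> {(a, b, t). a = b \<and> a < n \<and> t}"

definition idxp :: "nat \<Rightarrow> (nat \<times> nat \<times> bool) set" where
  "idxp n = {(a, b, t). a < b \<and> b = n}"

definition phi :: "nat \<times> nat \<times> bool \<Rightarrow> cmat \<Rightarrow> real" where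
  "phi i Z = (case i of (a, b, t) \<Rightarrow> if t then Im (Z a b) else Re (Z a b))"

lemma idx_un: "idx n = idxk n \<union> idxp n" and idx_dis: "idxk n \<inter> idxp n = {}"
  unfolding idx_def idxk_def idxp_def by auto

lemma finite_idx[simp]: "finite (idx n)"
proof -
  have "idx n \<subseteq> {..n} \<times> {..n} \<times> UNIV" unfolding idx_def by auto
  then show ?thesis by (rule finite_subset) auto
qed

lemma finite_idxk[simp]: "finite (idxk n)" and finite_idxp[simp]: "finite (idxp n)"
  using finite_idx[of n] unfolding idx_un by auto

lemma alpha_eq: "a < b \<Longrightarrow> b < n \<Longrightarrow> alpha (Suc a) (Suc b) = off n a b 1"
  unfolding alpha_def elem_def off_def sg_def by (simp add: fun_eq_iff)

lemma ibeta_eq: "a < b \<Longrightarrow> b < n \<Longrightarrow> smul \<i> (beta (Suc a) (Suc b)) = off n a b \<i>"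
  unfolding beta_def elem_def off_def sg_def smul_def by (simp add: fun_eq_iff)

lemma betap_eq: "a < n \<Longrightarrow> beta (Suc a) (Suc n) = off n a n 1"
  unfolding beta_def elem_def off_def sg_def by (simp add: fun_eq_iff)

lemma ialphap_eq: "a < n \<Longrightarrow> smul \<i> (alpha (Suc a) (Suc n)) = off n a n \<i>"
  unfolding alpha_def elem_def off_def sg_def smul_def by (simp add: fun_eq_iff)

lemma hvec_eq: "a < n \<Longrightarrow> hvec n (Suc a) = hd n a"
  unfolding hvec_def elem_def hd_def smul_def by (simp add: fun_eq_iff)

lemma kbasis_eq: "kbasis n = bas n ` idxk n"
proof
  show "kbasis n \<subseteq> bas n ` idxk n"
  proof
    fix E assume "E \<in> kbasis n"
    then consider (a) a b where "a < b" "b < n" "E = alpha (Suc a) (Suc b)"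
      | (b) a b where "a < b" "b < n" "E = smul \<i> (beta (Suc a) (Suc b))"
      | (c) a where "a < n" "E = hvec n (Suc a)"
    proof -
      assume A: "\<And>a b. a < b \<Longrightarrow> b < n \<Longrightarrow> E = alpha (Suc a) (Suc b) \<Longrightarrow> thesis"
        and B: "\<And>a b. a < b \<Longrightarrow> b < n \<Longrightarrow> E = smul \<i> (beta (Suc a) (Suc b)) \<Longrightarrow> thesis"
        and C: "\<And>a. a < n \<Longrightarrow> E = hvec n (Suc a) \<Longrightarrow> thesis"
      from \<open>E \<in> kbasis n\<close> show thesis unfolding kbasis_def
      proof (elim UnE CollectE exE conjE)
        fix j k assume h: "E = alpha j k" "1 \<le> j" "j < k" "k \<le> n"
        then have "j = Suc (j-1)" "k = Suc (k-1)" "j-1 < k-1" "k-1 < n" by arith+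
        then show thesis using A h by metis
      next
        fix j k assume h: "E = smul \<i> (beta j k)" "1 \<le> j" "j < k" "k \<le> n"
        then have "j = Suc (j-1)" "k = Suc (k-1)" "j-1 < k-1" "k-1 < n" by arith+
        then show thesis using B h by metis
      next
        fix j assume h: "E = hvec n j" "1 \<le> j" "j \<le> n"
        then have "j = Suc (j-1)" "j-1 < n" by arith+
        then show thesis using C h by metis
      qed
    qed
    then show "E \<in> bas n ` idxk n"
    proof cases
      case a
      then have "E = bas n (a, b, False)" by (simp add: alpha_eq bas_def tv_def)
      moreover have "(a, b, False) \<in> idxk n" using a unfolding idxk_def by auto
      ultimately show ?thesis by blast
    next
      case b
      then have "E = bas n (a, b, True)" by (simp add: ibeta_eq bas_def tv_def)
      moreover have "(a, b, True) \<in> idxk n" using b unfolding idxk_def by auto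
      ultimately show ?thesis by blast
    next
      case c
      then have "E = bas n (a, a, True)" by (simp add: hvec_eq bas_def tv_def)
      moreover have "(a, a, True) \<in> idxk n" using c unfolding idxk_def by auto
      ultimately show ?thesis by blast
    qed
  qed
next
  show "bas n ` idxk n \<subseteq> kbasis n"
  proof
    fix E assume "E \<in> bas n ` idxk n"
    then obtain a b t where i: "(a,b,t) \<in> idxk n" "E = bas n (a,b,t)" by auto
    show "E \<in> kbasis n"
    proof (cases "a = b")
      case True
      then have "E = hvec n (Suc a)" "a < n" using i unfolding idxk_def by (auto simp: hvec_eq bas_def)
      then have "E \<in> {hvec n j | j. 1 \<le> j \<and> j \<le> n}" by auto
      then show ?thesis unfolding kbasis_def by blast
    next
      case False
      then have ab: "a < b" "b < n" using i unfolding idxk_def by auto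
      show ?thesis
      proof (cases t)
        case True
        then have "E = smul \<i> (beta (Suc a) (Suc b))" using i ab by (simp add: ibeta_eq bas_def tv_def)
        then have "\<exists>j k. E = smul \<i> (beta j k) \<and> 1 \<le> j \<and> j < k \<and> k \<le> n" using ab by (intro exI[of _ "Suc a"] exI[of _ "Suc b"]) simp
        then have "E \<in> {smul \<i> (beta j k) | j k. 1 \<le> j \<and> j < k \<and> k \<le> n}" by blast
        then show ?thesis unfolding kbasis_def by blast
      next
        case False
        then have "E = alpha (Suc a) (Suc b)" using i ab by (simp add: alpha_eq bas_def tv_def)
        then have "\<exists>j k. E = alpha j k \<and> 1 \<le> j \<and> j < k \<and> k \<le> n" using ab by (intro exI[of _ "Suc a"] exI[of _ "Suc b"]) simp
        then have "E \<in> {alpha j k | j k. 1 \<le> j \<and> j < k \<and> k \<le> n}" by blast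
        then show ?thesis unfolding kbasis_def by blast
      qed
    qed
  qed
qed

lemma pbasis_eq: "pbasis n = bas n ` idxp n"
proof
  show "pbasis n \<subseteq> bas n ` idxp n"
  proof
    fix E assume "E \<in> pbasis n"
    then consider (a) a where "a < n" "E = beta (Suc a) (n+1)"
      | (b) a where "a < n" "E = smul \<i> (alpha (Suc a) (n+1))"
    proof -
      assume A: "\<And>a. a < n \<Longrightarrow> E = beta (Suc a) (n+1) \<Longrightarrow> thesis"
        and B: "\<And>a. a < n \<Longrightarrow> E = smul \<i> (alpha (Suc a) (n+1)) \<Longrightarrow> thesis"
      from \<open>E \<in> pbasis n\<close> show thesis unfolding pbasis_def
      proof (elim UnE CollectE exE conjE)
        fix j assume h: "E = beta j (n+1)" "1 \<le> j" "j \<le> n"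
        then have "j = Suc (j-1)" "j-1 < n" by arith+
        then show thesis using A h by metis
      next
        fix j assume h: "E = smul \<i> (alpha j (n+1))" "1 \<le> j" "j \<le> n"
        then have "j = Suc (j-1)" "j-1 < n" by arith+
        then show thesis using B h by metis
      qed
    qed
    then show "E \<in> bas n ` idxp n"
    proof cases
      case a
      then have "E = bas n (a, n, False)" by (simp add: betap_eq bas_def tv_def)
      moreover have "(a, n, False) \<in> idxp n" using a unfolding idxp_def by auto
      ultimately show ?thesis by blast
    next
      case b
      then have "E = bas n (a, n, True)" by (simp add: ialphap_eq bas_def tv_def)
      moreover have "(a, n, True) \<in> idxp n" using b unfolding idxp_def by auto
      ultimately show ?thesis by blast
    qed
  qed
next
  show "bas n ` idxp n \<subseteq> pbasis n"
  proof
    fix E assume "E \<in> bas n ` idxp n"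
    then obtain a b t where i: "(a,b,t) \<in> idxp n" "E = bas n (a,b,t)" by auto
    then have ab: "a < n" "b = n" unfolding idxp_def by auto
    show "E \<in> pbasis n"
    proof (cases t)
      case True
      then have "E = smul \<i> (alpha (Suc a) (n+1))" using i ab by (simp add: ialphap_eq bas_def tv_def)
      then have "\<exists>j. E = smul \<i> (alpha j (n+1)) \<and> 1 \<le> j \<and> j \<le> n" using ab by (intro exI[of _ "Suc a"]) simp
      then have "E \<in> {smul \<i> (alpha j (n+1)) | j. 1 \<le> j \<and> j \<le> n}" by blast
      then show ?thesis unfolding pbasis_def by blast
    next
      case False
      then have "E = beta (Suc a) (n+1)" using i ab by (simp add: betap_eq bas_def tv_def)
      then have "\<exists>j. E = beta j (n+1) \<and> 1 \<le> j \<and> j \<le> n" using ab by (intro exI[of _ "Suc a"]) simp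
      then have "E \<in> {beta j (n+1) | j. 1 \<le> j \<and> j \<le> n}" by blast
      then show ?thesis unfolding pbasis_def by blast
    qed
  qed
qed

lemma std_eq: "std_basis n = bas n ` idx n"
  unfolding std_basis_def kbasis_eq pbasis_eq idx_un by auto

lemma phi_bas: assumes "i \<in> idx n" "j \<in> idx n" shows "phi i (bas n j) = (if i = j then 1 else 0)"
proof -
  obtain a b t where i: "i = (a,b,t)" by (cases i) auto
  obtain c d s where j: "j = (c,d,s)" by (cases j) auto
  have ab: "a < b \<and> b \<le> n \<or> a = b \<and> a < n \<and> t" using assms(1) unfolding i idx_def by auto
  have cd: "c < d \<and> d \<le> n \<or> c = d \<and> c < n \<and> s" using assms(2) unfolding j idx_def by auto
  show ?thesis
  proof (cases "c = d")
    case True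
    then show ?thesis using ab cd unfolding i j phi_def bas_def hd_def by auto
  next
    case False
    then show ?thesis using ab cd unfolding i j phi_def bas_def off_def tv_def sg_def by auto
  qed
qed

lemma inj_bas: "inj_on (bas n) (idx n)"
proof
  fix i j assume "i \<in> idx n" "j \<in> idx n" "bas n i = bas n j"
  then have "phi i (bas n i) = phi i (bas n j)" by simp
  then show "i = j" using phi_bas[of i n i] phi_bas[of i n j] \<open>i \<in> idx n\<close> \<open>j \<in> idx n\<close>
    by (auto split: if_splits)
qed


lemma sum_app: "(sum f S) x = sum (\<lambda>i. f i x) S"
  by (induction S rule: infinite_finite_induct) auto

lemma sum_app2: "(sum f S :: cmat) x y = sum (\<lambda>i. f i x y) S"
  by (simp add: sum_app)

lemma sum_off: fixes B :: "nat set" assumes "finite B"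
  shows "(\<Sum>i\<in>{(a,b,t). a < b \<and> b \<in> B}. g i) = (\<Sum>b\<in>B. \<Sum>a<b. g (a,b,False) + g (a,b,True))"
proof -
  have "(\<Sum>b\<in>B. \<Sum>a<b. g (a,b,False) + g (a,b,True)) = (\<Sum>b\<in>B. \<Sum>a<b. \<Sum>t\<in>UNIV. g (a,b,t))"
    by (simp add: UNIV_bool add.commute)
  also have "\<dots> = (\<Sum>b\<in>B. \<Sum>p\<in>{..<b} \<times> UNIV. g (fst p, b, snd p))"
    by (simp add: sum.cartesian_product split_beta)
  also have "\<dots> = (\<Sum>q\<in>(SIGMA b:B. {..<b} \<times> UNIV). g (fst (snd q), fst q, snd (snd q)))"
    using assms by (subst sum.Sigma) (auto simp: split_beta)
  also have "\<dots> = (\<Sum>i\<in>{(a,b,t). a < b \<and> b \<in> B}. g i)"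
    by (rule sum.reindex_bij_witness[of _ "\<lambda>(a,b,t). (b,a,t)" "\<lambda>(b,a,t). (a,b,t)"]) auto
  finally show ?thesis by simp
qed

lemma sum_diag: "(\<Sum>i\<in>{(a,b,t). a = b \<and> a < n \<and> t}. g i) = (\<Sum>a<n. g (a,a,True))"
  by (rule sum.reindex_bij_witness[of _ "\<lambda>a. (a,a,True)" "\<lambda>(a,b,t). a"]) auto

lemma sum_idx: "sum g (idx n) = (\<Sum>b\<le>n. \<Sum>a<b. g (a,b,False) + g (a,b,True)) + (\<Sum>a<n. g (a,a,True))"
proof -
  have "idx n = {(a,b,t). a < b \<and> b \<in> {..n}} \<union> {(a,b,t). a = b \<and> a < n \<and> t}"
    unfolding idx_def by auto
  moreover have "finite {(a,b,t::bool). a < b \<and> b \<in> {..n}}"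
    by (rule finite_subset[of _ "{..n} \<times> {..n} \<times> (UNIV::bool set)"]) auto
  moreover have "finite {(a,b,t::bool). a = b \<and> a < n \<and> t}"
    by (rule finite_subset[of _ "{..n} \<times> {..n} \<times> (UNIV::bool set)"]) auto
  ultimately show ?thesis using sum_off[of "{..n}" g]
    by (simp add: sum.union_disjoint disjoint_iff sum_diag)
qed

lemma sum_idxk: "sum g (idxk n) = (\<Sum>b<n. \<Sum>a<b. g (a,b,False) + g (a,b,True)) + (\<Sum>a<n. g (a,a,True))"
proof -
  have "idxk n = {(a,b,t). a < b \<and> b \<in> {..<n}} \<union> {(a,b,t). a = b \<and> a < n \<and> t}"
    unfolding idxk_def by auto
  moreover have "finite {(a,b,t::bool). a < b \<and> b \<in> {..<n}}"
    by (rule finite_subset[of _ "{..n} \<times> {..n} \<times> (UNIV::bool set)"]) auto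
  moreover have "finite {(a,b,t::bool). a = b \<and> a < n \<and> t}"
    by (rule finite_subset[of _ "{..n} \<times> {..n} \<times> (UNIV::bool set)"]) auto
  ultimately show ?thesis using sum_off[of "{..<n}" g]
    by (simp add: sum.union_disjoint disjoint_iff sum_diag)
qed

lemma sum_idxp: "sum g (idxp n) = (\<Sum>a<n. g (a,n,False) + g (a,n,True))"
proof -
  have "idxp n = {(a,b,t). a < b \<and> b \<in> {n}}"
    unfolding idxp_def by auto
  then have "sum g (idxp n) = (\<Sum>b\<in>{n}. \<Sum>a<b. g (a,b,False) + g (a,b,True))"
    using sum_off[of "{n}" g] by simp
  then show ?thesis by simp
qed


definition rcs :: "nat \<Rightarrow> (nat \<times> nat \<times> bool \<Rightarrow> real) \<Rightarrow> cmat" where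
  "rcs n c = (\<Sum>i\<in>idx n. smul (complex_of_real (c i)) (bas n i))"

lemma off_split: "a < b \<Longrightarrow> off n a b u x y = (if x = a \<and> y = b then u else 0) + (if x = b \<and> y = a then - sg n b * cnj u else 0)"
  unfolding off_def by auto

lemma hd_split: "a < n \<Longrightarrow> hd n a x y = (if x = a \<and> y = a then \<i> else 0) + (if x = n \<and> y = n then - \<i> else 0)"
  unfolding hd_def by auto

lemma off_comb: "complex_of_real r * off n a b 1 x y + complex_of_real s * off n a b \<i> x y = off n a b (complex_of_real r + \<i> * complex_of_real s) x y"
  unfolding off_def by (auto simp: algebra_simps)

lemma sum_tri1: "(\<Sum>b\<le>(n::nat). \<Sum>a<b. (if x = a \<and> y = b then f a b else 0)) = (if x < y \<and> y \<le> n then f x y else 0)"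
proof -
  have "(\<Sum>b\<le>n. \<Sum>a<b. (if x = a \<and> y = b then f a b else 0)) = (\<Sum>b\<le>n. if y = b then (if x < b then f x b else 0) else 0)"
  proof (rule sum.cong[OF refl])
    fix b show "(\<Sum>a<b. (if x = a \<and> y = b then f a b else 0)) = (if y = b then (if x < b then f x b else 0) else 0)"
      by (cases "y = b") (simp_all add: sum.delta sum.delta')
  qed
  also have "\<dots> = (if x < y \<and> y \<le> n then f x y else 0)"
    by (simp add: sum.delta)
  finally show ?thesis .
qed

lemma sum_tri2: "(\<Sum>b\<le>(n::nat). \<Sum>a<b. (if x = b \<and> y = a then f a b else 0)) = (if y < x \<and> x \<le> n then f y x else 0)"
proof -
  have "(\<Sum>b\<le>n. \<Sum>a<b. (if x = b \<and> y = a then f a b else 0)) = (\<Sum>b\<le>n. if x = b then (if y < b then f y b else 0) else 0)"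
  proof (rule sum.cong[OF refl])
    fix b show "(\<Sum>a<b. (if x = b \<and> y = a then f a b else 0)) = (if x = b then (if y < b then f y b else 0) else 0)"
      by (cases "x = b") (simp_all add: sum.delta sum.delta')
  qed
  also have "\<dots> = (if y < x \<and> x \<le> n then f y x else 0)"
    by (simp add: sum.delta)
  finally show ?thesis .
qed

lemma sum_offs: "(\<Sum>b\<le>n. \<Sum>a<b. off n a b (w a b) x y) =
   (if x < y \<and> y \<le> n then w x y else 0) + (if y < x \<and> x \<le> n then - sg n x * cnj (w y x) else 0)"
proof -
  have "(\<Sum>b\<le>n. \<Sum>a<b. off n a b (w a b) x y) =
    (\<Sum>b\<le>n. \<Sum>a<b. (if x = a \<and> y = b then w a b else 0) + (if x = b \<and> y = a then - sg n b * cnj (w a b) else 0))"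
    by (intro sum.cong refl) (simp add: off_split)
  also have "\<dots> = (\<Sum>b\<le>n. \<Sum>a<b. (if x = a \<and> y = b then w a b else 0)) +
     (\<Sum>b\<le>n. \<Sum>a<b. (if x = b \<and> y = a then - sg n b * cnj (w a b) else 0))"
    by (simp add: sum.distrib)
  also have "\<dots> = (if x < y \<and> y \<le> n then w x y else 0) + (if y < x \<and> x \<le> n then - sg n x * cnj (w y x) else 0)"
    by (simp only: sum_tri1 sum_tri2[where f = "\<lambda>a b. - sg n b * cnj (w a b)"])
  finally show ?thesis .
qed

lemma sum_hds: "(\<Sum>a<n. c a * hd n a x y) = (if x = y \<and> x < n then \<i> * c x else 0) + (if x = n \<and> y = n then - \<i> * (\<Sum>a<n. c a) else 0)"
proof -
  have "(\<Sum>a<n. c a * hd n a x y) = (\<Sum>a<n. (if x = a then (if y = a then \<i> * c a else 0) else 0) + (if x = n \<and> y = n then - \<i> * c a else 0))"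
    by (intro sum.cong refl) (auto simp: hd_split)
  also have "\<dots> = (if x = y \<and> x < n then \<i> * c x else 0) + (if x = n \<and> y = n then - \<i> * (\<Sum>a<n. c a) else 0)"
    by (cases "x = n \<and> y = n") (auto simp: sum.distrib sum.delta sum.delta' sum_distrib_left)
  finally show ?thesis .
qed

lemma rcs_entry: "rcs n c x y =
   (if x < y \<and> y \<le> n then complex_of_real (c (x,y,False)) + \<i> * complex_of_real (c (x,y,True)) else 0)
 + (if y < x \<and> x \<le> n then - sg n x * cnj (complex_of_real (c (y,x,False)) + \<i> * complex_of_real (c (y,x,True))) else 0)
 + (if x = y \<and> x < n then \<i> * complex_of_real (c (x,x,True)) else 0)
 + (if x = n \<and> y = n then - \<i> * (\<Sum>a<n. complex_of_real (c (a,a,True))) else 0)"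
proof -
  have "rcs n c x y = (\<Sum>i\<in>idx n. complex_of_real (c i) * bas n i x y)"
    unfolding rcs_def sum_app2 smul_def by simp
  also have "\<dots> = (\<Sum>b\<le>n. \<Sum>a<b. off n a b (complex_of_real (c (a,b,False)) + \<i> * complex_of_real (c (a,b,True))) x y)
     + (\<Sum>a<n. complex_of_real (c (a,a,True)) * hd n a x y)"
    unfolding sum_idx
    by (intro arg_cong2[where f = "(+)"] sum.cong refl) (auto simp: bas_def tv_def off_comb)
  finally show ?thesis by (simp add: sum_offs sum_hds add.assoc)
qed

lemma su_entry: "X \<in> su n \<Longrightarrow> a \<le> n \<Longrightarrow> b \<le> n \<Longrightarrow> X a b = - (sg n a * sg n b) * cnj (X b a)"
  unfolding su_iff sucond_def by blast

lemma su_supp: "X \<in> su n \<Longrightarrow> n < a \<or> n < b \<Longrightarrow> X a b = 0"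
  unfolding su_iff supported_def by blast

lemma su_tr: "X \<in> su n \<Longrightarrow> (\<Sum>a\<le>n. X a a) = 0"
  unfolding su_iff by blast

lemma su_diag: assumes "X \<in> su n" "a \<le> n" shows "X a a = \<i> * complex_of_real (Im (X a a))"
proof -
  have "X a a = - cnj (X a a)" using su_entry[OF assms(1) assms(2) assms(2)]
    by (simp add: sg_def split: if_splits)
  then have "Re (X a a) = 0" by (simp add: complex_eq_iff)
  then show ?thesis by (simp add: complex_eq_iff)
qed

lemma rcs_phi: assumes Z: "Z \<in> su n" shows "rcs n (\<lambda>i. phi i Z) = Z"
proof (intro ext)
  fix x y
  have ce: "\<And>z. complex_of_real (Re z) + \<i> * complex_of_real (Im z) = z" by (simp add: complex_eq_iff)
  consider "x < y \<and> y \<le> n" | "y < x \<and> x \<le> n" | "x = y \<and> x < n" | "x = n \<and> y = n" | "n < x \<or> n < y"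
    by linarith
  then show "rcs n (\<lambda>i. phi i Z) x y = Z x y"
  proof cases
    case 1 then show ?thesis by (simp add: rcs_entry phi_def ce)
  next
    case 2
    then have "Z x y = - (sg n x * sg n y) * cnj (Z y x)" by (intro su_entry[OF Z]) auto
    moreover have "sg n y = 1" using 2 by (simp add: sg_def)
    ultimately show ?thesis using 2 by (simp add: rcs_entry phi_def ce)
  next
    case 3
    then show ?thesis using su_diag[OF Z, of x] by (simp add: rcs_entry phi_def)
  next
    case 4
    have "(\<Sum>a\<le>n. Z a a) = 0" by (rule su_tr[OF Z])
    then have "Z n n = - (\<Sum>a<n. Z a a)" by (simp add: lessThan_Suc_atMost[symmetric] add_eq_0_iff)
    also have "\<dots> = - (\<Sum>a<n. \<i> * complex_of_real (Im (Z a a)))"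
      using su_diag[OF Z] by (intro arg_cong[where f = uminus] sum.cong) auto
    finally have "Z n n = - (\<i> * (\<Sum>a<n. complex_of_real (Im (Z a a))))" by (simp only: sum_distrib_left)
    then show ?thesis using 4 by (simp add: rcs_entry phi_def)
  next
    case 5
    then show ?thesis using su_supp[OF Z 5] by (auto simp: rcs_entry)
  qed
qed

lemma phi_rcs: assumes "j \<in> idx n" shows "phi j (rcs n c) = c j"
proof -
  obtain a b t where j: "j = (a,b,t)" by (cases j) auto
  have "a < b \<and> b \<le> n \<or> a = b \<and> a < n \<and> t" using assms unfolding j idx_def by auto
  then show ?thesis unfolding j by (cases t) (auto simp: rcs_entry phi_def)
qed

lemma coord_eq: assumes Z: "Z \<in> su n" and j: "j \<in> idx n" shows "coord n Z (bas n j) = phi j Z"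
  unfolding coord_def
proof (rule the_equality)
  let ?c = "\<lambda>F. if F \<in> std_basis n then phi (inv_into (idx n) (bas n) F) Z else 0"
  have cb: "?c (bas n i) = phi i Z" if "i \<in> idx n" for i
    using that inj_bas[of n] by (simp add: std_eq inv_into_f_f)
  have "(\<Sum>F\<in>std_basis n. smul (complex_of_real (?c F)) F) = (\<Sum>i\<in>idx n. smul (complex_of_real (?c (bas n i))) (bas n i))"
    unfolding std_eq by (subst sum.reindex[OF inj_bas]) (simp only: comp_def)
  also have "\<dots> = rcs n (\<lambda>i. phi i Z)" unfolding rcs_def by (intro sum.cong refl) (simp add: cb)
  also have "\<dots> = Z" by (rule rcs_phi[OF Z])
  finally show "\<exists>c. (\<forall>F. F \<notin> std_basis n \<longrightarrow> c F = 0) \<and> Z = (\<Sum>F\<in>std_basis n. smul (complex_of_real (c F)) F) \<and> phi j Z = c (bas n j)"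
    using cb[OF j] by (intro exI[of _ ?c]) auto
next
  fix r assume "\<exists>c. (\<forall>F. F \<notin> std_basis n \<longrightarrow> c F = 0) \<and> Z = (\<Sum>F\<in>std_basis n. smul (complex_of_real (c F)) F) \<and> r = c (bas n j)"
  then obtain c where c: "Z = (\<Sum>F\<in>std_basis n. smul (complex_of_real (c F)) F)" "r = c (bas n j)" by blast
  have "Z = (\<Sum>i\<in>idx n. smul (complex_of_real (c (bas n i))) (bas n i))"
    unfolding c(1) std_eq by (subst sum.reindex[OF inj_bas]) (simp only: comp_def)
  then have "Z = rcs n (c \<circ> bas n)" unfolding rcs_def by simp
  then have "phi j Z = (c \<circ> bas n) j" using phi_rcs[OF j] by simp
  then show "r = phi j Z" using c(2) by simp
qed


lemma mmul_off_r: assumes "a < b" shows "mmul n A (off n a b u) k c =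
  (if k \<le> n \<and> c \<le> n then (if c = b \<and> a \<le> n then A k a * u else 0) + (if c = a \<and> b \<le> n then A k b * (- sg n b * cnj u) else 0) else 0)"
proof -
  have "(\<Sum>m\<le>n. A k m * off n a b u m c) = (\<Sum>m\<le>n. (if m = a then (if c = b then A k m * u else 0) else 0) + (if m = b then (if c = a then A k m * (- sg n b * cnj u) else 0) else 0))"
    using assms by (intro sum.cong refl) (auto simp: off_split)
  also have "\<dots> = (if c = b \<and> a \<le> n then A k a * u else 0) + (if c = a \<and> b \<le> n then A k b * (- sg n b * cnj u) else 0)"
    by (simp add: sum.distrib)
  finally show ?thesis unfolding mmul_def by simp
qed

lemma mmul_off_l: assumes "a < b" shows "mmul n (off n a b u) A k c =
  (if k \<le> n \<and> c \<le> n then (if k = a \<and> b \<le> n then u * A b c else 0) + (if k = b \<and> a \<le> n then (- sg n b * cnj u) * A a c else 0) else 0)"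
proof -
  have "(\<Sum>m\<le>n. off n a b u k m * A m c) = (\<Sum>m\<le>n. (if m = b then (if k = a then u * A m c else 0) else 0) + (if m = a then (if k = b then (- sg n b * cnj u) * A m c else 0) else 0))"
    using assms by (intro sum.cong refl) (auto simp: off_split)
  also have "\<dots> = (if k = a \<and> b \<le> n then u * A b c else 0) + (if k = b \<and> a \<le> n then (- sg n b * cnj u) * A a c else 0)"
    by (simp add: sum.distrib)
  finally show ?thesis unfolding mmul_def by simp
qed

lemma mmul_hd_r: assumes "a < n" shows "mmul n A (hd n a) k c =
  (if k \<le> n \<and> c \<le> n then (if c = a then A k a * \<i> else 0) + (if c = n then - (A k n * \<i>) else 0) else 0)"
proof -
  have "(\<Sum>m\<le>n. A k m * hd n a m c) = (\<Sum>m\<le>n. (if m = a then (if c = a then A k m * \<i> else 0) else 0) + (if m = n then (if c = n then - (A k m * \<i>) else 0) else 0))"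
    using assms by (intro sum.cong refl) (auto simp: hd_split)
  also have "\<dots> = (if c = a then A k a * \<i> else 0) + (if c = n then - (A k n * \<i>) else 0)"
    using assms by (simp add: sum.distrib)
  finally show ?thesis unfolding mmul_def by simp
qed

lemma mmul_hd_l: assumes "a < n" shows "mmul n (hd n a) A k c =
  (if k \<le> n \<and> c \<le> n then (if k = a then \<i> * A a c else 0) + (if k = n then - (\<i> * A n c) else 0) else 0)"
proof -
  have "(\<Sum>m\<le>n. hd n a k m * A m c) = (\<Sum>m\<le>n. (if m = a then (if k = a then \<i> * A m c else 0) else 0) + (if m = n then (if k = n then - (\<i> * A m c) else 0) else 0))"
    using assms by (intro sum.cong refl) (auto simp: hd_split)
  also have "\<dots> = (if k = a then \<i> * A a c else 0) + (if k = n then - (\<i> * A n c) else 0)"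
    using assms by (simp add: sum.distrib)
  finally show ?thesis unfolding mmul_def by simp
qed

lemma bracket_entry: "bracket n A B k c = (if k \<le> n \<and> c \<le> n then (\<Sum>m\<le>n. A k m * B m c) - (\<Sum>m\<le>n. B k m * A m c) else 0)"
  unfolding bracket_def mmul_def by simp

lemma Moff: assumes ab: "a < b" "b \<le> n"
  shows "bracket n X (bracket n Y (off n a b u)) a b =
    u * (mmul n X Y a a - X a a * Y b b - Y a a * X b b + mmul n Y X b b) - 2 * (- sg n b * cnj u) * (X a b * Y a b)"
proof -
  define v where "v = - sg n b * cnj u"
  define W where "W = bracket n Y (off n a b u)"
  have an: "a \<le> n" using ab by simp
  have Wcol: "W k b = Y k a * u - (if k = a then u * Y b b else 0) - (if k = b then v * Y a b else 0)" if "k \<le> n" for k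
    using that ab unfolding W_def bracket_def v_def by (simp add: mmul_off_r mmul_off_l)
  have Wrow: "W a c = (if c = b then Y a a * u else 0) + (if c = a then Y a b * v else 0) - u * Y b c" if "c \<le> n" for c
    using that ab unfolding W_def bracket_def v_def by (simp add: mmul_off_r mmul_off_l)
  have s1: "(\<Sum>k\<le>n. X a k * W k b) = u * mmul n X Y a a - u * (X a a * Y b b) - v * (X a b * Y a b)"
  proof -
    have "(\<Sum>k\<le>n. X a k * W k b) = (\<Sum>k\<le>n. u * (X a k * Y k a) - (if k = a then u * (X a a * Y b b) else 0) - (if k = b then v * (X a b * Y a b) else 0))"
      by (intro sum.cong refl) (auto simp: Wcol algebra_simps)
    also have "\<dots> = u * mmul n X Y a a - u * (X a a * Y b b) - v * (X a b * Y a b)"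
      using ab by (simp add: sum_subtractf sum_distrib_left mmul_def)
    finally show ?thesis .
  qed
  have s2: "(\<Sum>k\<le>n. W a k * X k b) = u * (Y a a * X b b) + v * (X a b * Y a b) - u * mmul n Y X b b"
  proof -
    have "(\<Sum>k\<le>n. W a k * X k b) = (\<Sum>k\<le>n. (if k = b then u * (Y a a * X b b) else 0) + (if k = a then v * (X a b * Y a b) else 0) - u * (Y b k * X k b))"
      by (intro sum.cong refl) (auto simp: Wrow algebra_simps)
    also have "\<dots> = u * (Y a a * X b b) + v * (X a b * Y a b) - u * mmul n Y X b b"
      using ab by (simp add: sum_subtractf sum.distrib sum_distrib_left mmul_def)
    finally show ?thesis .
  qed
  have "bracket n X W a b = (\<Sum>k\<le>n. X a k * W k b) - (\<Sum>k\<le>n. W a k * X k b)"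
    using ab by (simp add: bracket_entry)
  also have "\<dots> = u * (mmul n X Y a a - X a a * Y b b - Y a a * X b b + mmul n Y X b b) - 2 * v * (X a b * Y a b)"
    unfolding s1 s2 by (simp add: algebra_simps)
  finally show ?thesis unfolding W_def v_def .
qed

lemma Mhd: assumes a: "a < n"
  shows "bracket n X (bracket n Y (hd n a)) a a =
    \<i> * (mmul n X Y a a - 2 * (X a a * Y a a) + X a n * Y n a + Y a n * X n a + mmul n Y X a a)"
proof -
  define W where "W = bracket n Y (hd n a)"
  have Wcol: "W k a = Y k a * \<i> - (if k = a then \<i> * Y a a else 0) + (if k = n then \<i> * Y n a else 0)" if "k \<le> n" for k
    using that a unfolding W_def bracket_def by (simp add: mmul_hd_r mmul_hd_l)
  have Wrow: "W a c = (if c = a then Y a a * \<i> else 0) - (if c = n then Y a n * \<i> else 0) - \<i> * Y a c" if "c \<le> n" for c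
    using that a unfolding W_def bracket_def by (simp add: mmul_hd_r mmul_hd_l)
  have s1: "(\<Sum>k\<le>n. X a k * W k a) = \<i> * mmul n X Y a a - \<i> * (X a a * Y a a) + \<i> * (X a n * Y n a)"
  proof -
    have "(\<Sum>k\<le>n. X a k * W k a) = (\<Sum>k\<le>n. \<i> * (X a k * Y k a) - (if k = a then \<i> * (X a a * Y a a) else 0) + (if k = n then \<i> * (X a n * Y n a) else 0))"
      by (intro sum.cong refl) (auto simp: Wcol algebra_simps)
    also have "\<dots> = \<i> * mmul n X Y a a - \<i> * (X a a * Y a a) + \<i> * (X a n * Y n a)"
      using a by (simp add: sum_subtractf sum.distrib sum_distrib_left mmul_def)
    finally show ?thesis .
  qed
  have s2: "(\<Sum>k\<le>n. W a k * X k a) = \<i> * (X a a * Y a a) - \<i> * (Y a n * X n a) - \<i> * mmul n Y X a a"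
  proof -
    have "(\<Sum>k\<le>n. W a k * X k a) = (\<Sum>k\<le>n. (if k = a then \<i> * (X a a * Y a a) else 0) - (if k = n then \<i> * (Y a n * X n a) else 0) - \<i> * (Y a k * X k a))"
      by (intro sum.cong refl) (auto simp: Wrow algebra_simps)
    also have "\<dots> = \<i> * (X a a * Y a a) - \<i> * (Y a n * X n a) - \<i> * mmul n Y X a a"
      using a by (simp add: sum_subtractf sum.distrib sum_distrib_left mmul_def)
    finally show ?thesis .
  qed
  have "bracket n X W a a = (\<Sum>k\<le>n. X a k * W k a) - (\<Sum>k\<le>n. W a k * X k a)"
    using a by (simp add: bracket_entry)
  also have "\<dots> = \<i> * (mmul n X Y a a - 2 * (X a a * Y a a) + X a n * Y n a + Y a n * X n a + mmul n Y X a a)"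
    unfolding s1 s2 by (simp add: algebra_simps)
  finally show ?thesis unfolding W_def .
qed

lemma cnj_sg: "cnj (sg n a) = sg n a"
  by (simp add: sg_def)

lemma sg_sq2: "sg n a * (sg n a * z) = z"
  by (simp add: sg_def)

lemma sg_real: "sg n a = 1 \<or> sg n a = -1"
  by (simp add: sg_def)

lemma su_cnj: "X \<in> su n \<Longrightarrow> a \<le> n \<Longrightarrow> b \<le> n \<Longrightarrow> cnj (X a b) = - (sg n a * sg n b) * X b a"
proof -
  assume h: "X \<in> su n" "a \<le> n" "b \<le> n"
  then have "X b a = - (sg n b * sg n a) * cnj (X a b)" using su_entry[OF h(1) h(3) h(2)] by simp
  then have "(sg n b * sg n a) * X b a = - ((sg n b * sg n a) * (sg n b * sg n a)) * cnj (X a b)" by simp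
  also have "(sg n b * sg n a) * (sg n b * sg n a) = 1" using sg_sq[of n a] sg_sq[of n b] by (simp add: algebra_simps)
  finally show ?thesis by (simp add: algebra_simps)
qed

lemma bracket_supp: "supported n (bracket n X Y)"
  unfolding supported_def bracket_entry by auto

lemma bracket_su: assumes X: "X \<in> su n" and Y: "Y \<in> su n" shows "bracket n X Y \<in> su n"
  unfolding su_iff
proof (intro conjI)
  show "supported n (bracket n X Y)" by (rule bracket_supp)
  show "sucond n (bracket n X Y)" unfolding sucond_def
  proof (intro allI impI)
    fix a b assume a: "a \<le> n" and b: "b \<le> n"
    have c1: "cnj (X b m * Y m a) = (sg n a * sg n b) * (Y a m * X m b)" if "m \<le> n" for m
      using su_cnj[OF X b that] su_cnj[OF Y that a] sg_sq[of n m] by (simp add: algebra_simps)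
    have c2: "cnj (Y b m * X m a) = (sg n a * sg n b) * (X a m * Y m b)" if "m \<le> n" for m
      using su_cnj[OF Y b that] su_cnj[OF X that a] sg_sq[of n m] by (simp add: algebra_simps)
    have e1: "(\<Sum>m\<le>n. cnj (X b m * Y m a)) = (\<Sum>m\<le>n. (sg n a * sg n b) * (Y a m * X m b))"
      by (intro sum.cong refl c1) simp
    have e2: "(\<Sum>m\<le>n. cnj (Y b m * X m a)) = (\<Sum>m\<le>n. (sg n a * sg n b) * (X a m * Y m b))"
      by (intro sum.cong refl c2) simp
    have "cnj (bracket n X Y b a) = cnj ((\<Sum>m\<le>n. X b m * Y m a) - (\<Sum>m\<le>n. Y b m * X m a))"
      using a b by (simp add: bracket_entry)
    also have "\<dots> = (\<Sum>m\<le>n. cnj (X b m * Y m a)) - (\<Sum>m\<le>n. cnj (Y b m * X m a))"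
      by (simp only: complex_cnj_diff cnj_sum)
    also have "\<dots> = (sg n a * sg n b) * ((\<Sum>m\<le>n. Y a m * X m b) - (\<Sum>m\<le>n. X a m * Y m b))"
      unfolding e1 e2 by (simp add: sum_distrib_left right_diff_distrib)
    also have "\<dots> = - (sg n a * sg n b) * bracket n X Y a b"
      using a b by (simp add: bracket_entry algebra_simps)
    finally have "cnj (bracket n X Y b a) = - (sg n a * sg n b) * bracket n X Y a b" .
    then have "- (sg n a * sg n b) * cnj (bracket n X Y b a) = ((sg n a * sg n b) * (sg n a * sg n b)) * bracket n X Y a b"
      by (simp add: algebra_simps)
    also have "(sg n a * sg n b) * (sg n a * sg n b) = 1" using sg_sq[of n a] sg_sq[of n b] by (simp add: algebra_simps)
    finally show "bracket n X Y a b = - (sg n a * sg n b) * cnj (bracket n X Y b a)" by simp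
  qed
  show "(\<Sum>a\<le>n. bracket n X Y a a) = 0"
  proof -
    have "(\<Sum>a\<le>n. bracket n X Y a a) = (\<Sum>a\<le>n. \<Sum>m\<le>n. X a m * Y m a) - (\<Sum>a\<le>n. \<Sum>m\<le>n. Y a m * X m a)"
      by (simp add: bracket_entry sum_subtractf)
    also have "(\<Sum>a\<le>n. \<Sum>m\<le>n. Y a m * X m a) = (\<Sum>a\<le>n. \<Sum>m\<le>n. X a m * Y m a)"
      by (subst sum.swap) (simp add: mult.commute)
    finally show ?thesis by simp
  qed
qed

lemma bas_su: assumes "i \<in> idx n" shows "bas n i \<in> su n"
proof -
  obtain a b t where i: "i = (a,b,t)" by (cases i) auto
  have "a < b \<and> b \<le> n \<or> a = b \<and> a < n \<and> t" using assms unfolding i idx_def by auto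
  then show ?thesis
  proof
    assume ab: "a < b \<and> b \<le> n"
    have "(\<Sum>x\<le>n. off n a b (tv t) x x) = 0" using ab by (intro sum.neutral ballI) (auto simp: off_def)
    moreover have "sucond n (off n a b (tv t))" using ab unfolding sucond_def off_def sg_def by auto
    moreover have "supported n (off n a b (tv t))" using ab unfolding supported_def off_def by auto
    ultimately show ?thesis using ab unfolding su_iff i bas_def by simp
  next
    assume ab: "a = b \<and> a < n \<and> t"
    have "(\<Sum>x\<le>n. hd n a x x) = (\<Sum>x\<le>n. (if x = a then \<i> else 0) + (if x = n then - \<i> else 0))"
      using ab by (intro sum.cong refl) (auto simp: hd_def)
    also have "\<dots> = 0" using ab by (simp add: sum.distrib)
    finally have "(\<Sum>x\<le>n. hd n a x x) = 0" .
    moreover have "sucond n (hd n a)" using ab unfolding sucond_def hd_def sg_def by auto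
    moreover have "supported n (hd n a)" using ab unfolding supported_def hd_def by auto
    ultimately show ?thesis using ab unfolding su_iff i bas_def by simp
  qed
qed


lemma killing_sum: assumes X: "X \<in> su n" and Y: "Y \<in> su n"
  shows "killing n X Y = (\<Sum>i\<in>idx n. phi i (bracket n X (bracket n Y (bas n i))))"
proof -
  have "killing n X Y = (\<Sum>i\<in>idx n. coord n (bracket n X (bracket n Y (bas n i))) (bas n i))"
    unfolding killing_def std_eq by (subst sum.reindex[OF inj_bas]) (simp only: comp_def)
  also have "\<dots> = (\<Sum>i\<in>idx n. phi i (bracket n X (bracket n Y (bas n i))))"
    by (intro sum.cong refl coord_eq bracket_su X Y bas_su) auto
  finally show ?thesis .
qed

lemma tri_sym: "(\<Sum>b\<le>(n::nat). \<Sum>a<b. (f a b + f b a :: real)) = (\<Sum>a\<le>n. \<Sum>b\<le>n. f a b) - (\<Sum>a\<le>n. f a a)"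
proof (induction n)
  case 0 then show ?case by simp
next
  case (Suc n)
  have "(\<Sum>b\<le>Suc n. \<Sum>a<b. f a b + f b a) = (\<Sum>b\<le>n. \<Sum>a<b. f a b + f b a) + (\<Sum>a\<le>n. f a (Suc n) + f (Suc n) a)"
    by (simp add: lessThan_Suc_atMost)
  also have "\<dots> = (\<Sum>a\<le>Suc n. \<Sum>b\<le>Suc n. f a b) - (\<Sum>a\<le>Suc n. f a a)"
    unfolding Suc.IH by (simp add: sum.distrib)
  finally show ?case .
qed

lemma aux_cnj: fixes s t :: complex
  assumes "x = - (s*t) * cnj x'" "y' = -(t*s) * cnj y" "s*s=1" "t*t=1" "cnj s = s" "cnj t = t"
  shows "y * x' = cnj (x * y')"
proof -
  have "cnj (x * y') = (s*s) * (t*t) * (x' * y)" using assms(1,2,5,6) by (simp add: algebra_simps)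
  then show ?thesis using assms(3,4) by (simp add: mult.commute)
qed

lemma re_swap: assumes X: "X \<in> su n" and Y: "Y \<in> su n" and a: "a \<le> n"
  shows "Re (mmul n Y X a a) = Re (mmul n X Y a a)"
proof -
  have "Y a k * X k a = cnj (X a k * Y k a)" if "k \<le> n" for k
    by (rule aux_cnj[OF su_entry[OF X a that] su_entry[OF Y that a]]) (simp_all add: cnj_sg)
  then have r: "Re (Y a k * X k a) = Re (X a k * Y k a)" if "k \<le> n" for k using that by simp
  have "(\<Sum>k\<le>n. Re (Y a k * X k a)) = (\<Sum>k\<le>n. Re (X a k * Y k a))"
    by (intro sum.cong refl r) simp
  then show ?thesis using a unfolding mmul_def by simp
qed

lemma killing_formula: assumes X: "X \<in> su n" and Y: "Y \<in> su n"
  shows "killing n X Y = 2 * real (n + 1) * (\<Sum>a\<le>n. Re (mmul n X Y a a))"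
proof -
  define R where "R a = Re (mmul n X Y a a)" for a
  define P where "P a b = mmul n X Y a a - X a a * Y b b - Y a a * X b b + mmul n Y X b b" for a b
  define Q where "Q a = mmul n X Y a a - 2 * (X a a * Y a a) + X a n * Y n a + Y a n * X n a + mmul n Y X a a" for a
  define T where "T i = bracket n X (bracket n Y (bas n i))" for i
  have S1: "killing n X Y = (\<Sum>b\<le>n. \<Sum>a<b. Re (T (a,b,False) a b) + Im (T (a,b,True) a b)) + (\<Sum>a<n. Im (T (a,a,True) a a))"
    unfolding killing_sum[OF X Y] sum_idx T_def by (simp add: phi_def)
  have S2: "Re (T (a,b,False) a b) + Im (T (a,b,True) a b) = 2 * Re (P a b)" if "a < b" "b \<le> n" for a b
  proof -
    have "T (a,b,False) a b = P a b - 2 * (- sg n b) * (X a b * Y a b)"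
      using that unfolding T_def P_def by (simp add: bas_def tv_def Moff)
    moreover have "T (a,b,True) a b = \<i> * P a b - 2 * (- sg n b * (- \<i>)) * (X a b * Y a b)"
      using that unfolding T_def P_def by (simp add: bas_def tv_def Moff)
    ultimately show ?thesis using sg_real[of n b] by (elim disjE) simp_all
  qed
  have S3: "Im (T (a,a,True) a a) = Re (Q a)" if "a < n" for a
    using that unfolding T_def Q_def by (simp add: bas_def Mhd)
  have F1: "Re (mmul n Y X a a) = R a" if "a \<le> n" for a
    using re_swap[OF X Y that] unfolding R_def .
  define g where "g a b = 2 * R a - 2 * Re (X a a * Y b b)" for a b
  have z: "(\<Sum>a\<le>n. \<Sum>b\<le>n. Re (X a a * Y b b)) = 0"
  proof -
    have "(\<Sum>a\<le>n. \<Sum>b\<le>n. Re (X a a * Y b b)) = Re ((\<Sum>a\<le>n. X a a) * (\<Sum>b\<le>n. Y b b))"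
      by (simp only: sum_product Re_sum)
    also have "(\<Sum>a\<le>n. X a a) = 0" by (rule su_tr[OF X])
    finally show ?thesis by simp
  qed
  have "(\<Sum>b\<le>n. \<Sum>a<b. Re (T (a,b,False) a b) + Im (T (a,b,True) a b)) = (\<Sum>b\<le>n. \<Sum>a<b. g a b + g b a)"
  proof (intro sum.cong refl)
    fix b a assume "b \<in> {..n}" "a \<in> {..<b}"
    then have "a < b" "b \<le> n" by auto
    then show "Re (T (a,b,False) a b) + Im (T (a,b,True) a b) = g a b + g b a"
      unfolding S2[OF \<open>a < b\<close> \<open>b \<le> n\<close>] P_def g_def using F1[of b] \<open>b \<le> n\<close>
      by (simp add: R_def mult.commute)
  qed
  also have "\<dots> = (\<Sum>a\<le>n. \<Sum>b\<le>n. g a b) - (\<Sum>a\<le>n. g a a)" by (rule tri_sym)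
  also have "(\<Sum>a\<le>n. \<Sum>b\<le>n. g a b) = 2 * real (n+1) * (\<Sum>a\<le>n. R a)"
  proof -
    have "(\<Sum>a\<le>n. \<Sum>b\<le>n. g a b) = (\<Sum>a\<le>n. \<Sum>b\<le>n. 2 * R a) - 2 * (\<Sum>a\<le>n. \<Sum>b\<le>n. Re (X a a * Y b b))"
      unfolding g_def by (simp only: sum_subtractf sum_distrib_left)
    moreover have "(\<Sum>a\<le>n. \<Sum>b\<le>n. 2 * R a) = (\<Sum>a\<le>n. (2 * real (n+1)) * R a)"
      by (intro sum.cong refl) (simp add: algebra_simps)
    moreover have "(\<Sum>a\<le>n. (2 * real (n+1)) * R a) = 2 * real (n+1) * (\<Sum>a\<le>n. R a)"
      by (rule sum_distrib_left[symmetric])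
    ultimately show ?thesis unfolding z by simp
  qed
  finally have Off: "(\<Sum>b\<le>n. \<Sum>a<b. Re (T (a,b,False) a b) + Im (T (a,b,True) a b))
      = 2 * real (n+1) * (\<Sum>a\<le>n. R a) - (\<Sum>a\<le>n. 2 * R a - 2 * Re (X a a * Y a a))"
    unfolding g_def by simp
  have Qa: "Re (Q a) = 2 * R a - 2 * Re (X a a * Y a a) + 2 * Re (X n a * Y a n)" if "a < n" for a
  proof -
    have "X a n = cnj (X n a)" using su_entry[OF X, of a n] that by (simp add: sg_def)
    moreover have "Y n a = cnj (Y a n)" using su_entry[OF Y, of n a] that by (simp add: sg_def)
    ultimately have "Re (X a n * Y n a) = Re (X n a * Y a n)" by simp
    then show ?thesis unfolding Q_def using F1[of a] that by (simp add: R_def mult.commute)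
  qed
  have Dg: "(\<Sum>a<n. Im (T (a,a,True) a a)) = (\<Sum>a<n. 2 * R a - 2 * Re (X a a * Y a a) + 2 * Re (X n a * Y a n))"
    by (intro sum.cong refl) (simp add: S3 Qa)
  have Rn: "R n = (\<Sum>a<n. Re (X n a * Y a n)) + Re (X n n * Y n n)"
    unfolding R_def mmul_def by (simp add: lessThan_Suc_atMost[symmetric])
  define D where "D a = Re (X a a * Y a a)" for a
  define N where "N a = Re (X n a * Y a n)" for a
  have k1: "killing n X Y = 2 * real (n+1) * (\<Sum>a\<le>n. R a) - (\<Sum>a\<le>n. 2 * R a - 2 * D a)
      + (\<Sum>a<n. 2 * R a - 2 * D a + 2 * N a)"
    unfolding S1 Off Dg D_def N_def ..
  have Rn': "R n = (\<Sum>a<n. N a) + D n" unfolding Rn N_def D_def ..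
  have e1: "(\<Sum>a<n. 2 * R a - 2 * D a + 2 * N a) = 2 * (\<Sum>a<n. R a) - 2 * (\<Sum>a<n. D a) + 2 * (\<Sum>a<n. N a)"
    by (simp only: sum.distrib sum_subtractf sum_distrib_left)
  have e2: "(\<Sum>a\<le>n. 2 * R a - 2 * D a) = 2 * (\<Sum>a<n. R a) + 2 * R n - 2 * (\<Sum>a<n. D a) - 2 * D n"
    unfolding lessThan_Suc_atMost[symmetric] sum.lessThan_Suc by (simp only: sum_subtractf sum_distrib_left)
  have e3: "(\<Sum>a\<le>n. R a) = (\<Sum>a<n. R a) + R n"
    unfolding lessThan_Suc_atMost[symmetric] sum.lessThan_Suc ..
  have "killing n X Y = 2 * real (n+1) * (\<Sum>a\<le>n. R a)"
    unfolding k1 e1 e2 using e3 Rn' by (simp add: algebra_simps)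
  then show ?thesis unfolding R_def .
qed


definition ip :: "nat \<Rightarrow> cmat \<Rightarrow> cmat \<Rightarrow> real" where
  "ip n X Y = 2 * (\<Sum>a\<le>n. \<Sum>b\<le>n. Re (X a b * cnj (Y a b)))"

definition inK :: "nat \<Rightarrow> nat \<Rightarrow> nat \<Rightarrow> bool" where
  "inK n a b \<longleftrightarrow> (a < n \<and> b < n) \<or> (a = n \<and> b = n)"

definition inP :: "nat \<Rightarrow> nat \<Rightarrow> nat \<Rightarrow> bool" where
  "inP n a b \<longleftrightarrow> (a < n \<and> b = n) \<or> (a = n \<and> b < n)"

definition kres :: "nat \<Rightarrow> cmat \<Rightarrow> cmat" where
  "kres n X = (\<lambda>a b. if inK n a b then X a b else 0)"

definition pres :: "nat \<Rightarrow> cmat \<Rightarrow> cmat" where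
  "pres n X = (\<lambda>a b. if inP n a b then X a b else 0)"

lemma kres_su: assumes X: "X \<in> su n" shows "kres n X \<in> su n"
  unfolding su_iff
proof (intro conjI)
  show "supported n (kres n X)" unfolding supported_def kres_def inK_def by auto
  show "sucond n (kres n X)" unfolding sucond_def kres_def
    using su_cnj[OF X] by (auto simp: inK_def sg_def)
  have "(\<Sum>a\<le>n. kres n X a a) = (\<Sum>a\<le>n. X a a)"
    by (intro sum.cong refl) (auto simp: kres_def inK_def)
  then show "(\<Sum>a\<le>n. kres n X a a) = 0" using su_tr[OF X] by simp
qed

lemma pres_su: assumes X: "X \<in> su n" shows "pres n X \<in> su n"
  unfolding su_iff
proof (intro conjI)
  show "supported n (pres n X)" unfolding supported_def pres_def inP_def by auto
  show "sucond n (pres n X)" unfolding sucond_def pres_def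
    using su_cnj[OF X] by (auto simp: inP_def sg_def)
  show "(\<Sum>a\<le>n. pres n X a a) = 0"
    by (intro sum.neutral ballI) (auto simp: pres_def inP_def)
qed

lemma phi_kres: "i \<in> idxk n \<Longrightarrow> phi i (kres n X) = phi i X"
  unfolding idxk_def phi_def kres_def inK_def by auto

lemma phi_kres0: "i \<in> idxp n \<Longrightarrow> phi i (kres n X) = 0"
  unfolding idxp_def phi_def kres_def inK_def by auto

lemma phi_pres: "i \<in> idxp n \<Longrightarrow> phi i (pres n X) = phi i X"
  unfolding idxp_def phi_def pres_def inP_def by auto

lemma phi_pres0: "i \<in> idxk n \<Longrightarrow> phi i (pres n X) = 0"
  unfolding idxk_def phi_def pres_def inP_def by auto

lemma kpart_eq: assumes X: "X \<in> su n" shows "kpart n X = kres n X"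
proof -
  have sub: "idxk n \<subseteq> idx n" unfolding idx_un by auto
  have inj: "inj_on (bas n) (idxk n)" using inj_bas[of n] sub by (rule inj_on_subset)
  have "kpart n X = (\<Sum>i\<in>idxk n. smul (complex_of_real (coord n X (bas n i))) (bas n i))"
    unfolding kpart_def kbasis_eq by (subst sum.reindex[OF inj]) (simp only: comp_def)
  also have "\<dots> = (\<Sum>i\<in>idxk n. smul (complex_of_real (phi i (kres n X))) (bas n i))"
    using sub by (intro sum.cong refl) (auto simp: coord_eq[OF X] phi_kres)
  also have "\<dots> = rcs n (\<lambda>i. phi i (kres n X))"
  proof -
    have z: "(\<Sum>i\<in>idxp n. smul (complex_of_real (phi i (kres n X))) (bas n i)) = 0"
      by (intro sum.neutral ballI) (simp add: phi_kres0 smul_def zero_fun_def)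
    show ?thesis unfolding rcs_def idx_un using idx_dis[of n]
      by (subst sum.union_disjoint) (simp_all add: z)
  qed
  also have "\<dots> = kres n X" by (rule rcs_phi[OF kres_su[OF X]])
  finally show ?thesis .
qed

lemma ppart_eq: assumes X: "X \<in> su n" shows "ppart n X = pres n X"
proof -
  have sub: "idxp n \<subseteq> idx n" unfolding idx_un by auto
  have inj: "inj_on (bas n) (idxp n)" using inj_bas[of n] sub by (rule inj_on_subset)
  have "ppart n X = (\<Sum>i\<in>idxp n. smul (complex_of_real (coord n X (bas n i))) (bas n i))"
    unfolding ppart_def pbasis_eq by (subst sum.reindex[OF inj]) (simp only: comp_def)
  also have "\<dots> = (\<Sum>i\<in>idxp n. smul (complex_of_real (phi i (pres n X))) (bas n i))"
    using sub by (intro sum.cong refl) (auto simp: coord_eq[OF X] phi_pres)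
  also have "\<dots> = rcs n (\<lambda>i. phi i (pres n X))"
  proof -
    have z: "(\<Sum>i\<in>idxk n. smul (complex_of_real (phi i (pres n X))) (bas n i)) = 0"
      by (intro sum.neutral ballI) (simp add: phi_pres0 smul_def zero_fun_def)
    show ?thesis unfolding rcs_def idx_un using idx_dis[of n]
      by (subst sum.union_disjoint) (simp_all add: z)
  qed
  also have "\<dots> = pres n X" by (rule rcs_phi[OF pres_su[OF X]])
  finally show ?thesis .
qed

lemma gt_ip: assumes X: "X \<in> su n" and Y: "Y \<in> su n" shows "gt n X Y = ip n X Y"
proof -
  have pt: "Re (pres n X a m * pres n Y m a) - Re (kres n X a m * kres n Y m a) = Re (X a m * cnj (Y a m))"
    if "a \<le> n" "m \<le> n" for a m
  proof -
    have e: "cnj (Y a m) = - (sg n a * sg n m) * Y m a" by (rule su_cnj[OF Y that])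
    show ?thesis using that unfolding e pres_def kres_def inP_def inK_def sg_def
      by (cases "a = n"; cases "m = n") auto
  qed
  have "gt n X Y = (killing n (pres n X) (pres n Y) - killing n (kres n X) (kres n Y)) / real (n+1)"
    unfolding gt_def gcan_def ppart_eq[OF X] ppart_eq[OF Y] kpart_eq[OF X] kpart_eq[OF Y] ..
  also have "\<dots> = 2 * ((\<Sum>a\<le>n. Re (mmul n (pres n X) (pres n Y) a a)) - (\<Sum>a\<le>n. Re (mmul n (kres n X) (kres n Y) a a)))"
    unfolding killing_formula[OF pres_su[OF X] pres_su[OF Y]] killing_formula[OF kres_su[OF X] kres_su[OF Y]]
    by (simp add: field_simps)
  also have "\<dots> = 2 * (\<Sum>a\<le>n. \<Sum>m\<le>n. Re (pres n X a m * pres n Y m a) - Re (kres n X a m * kres n Y m a))"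
    unfolding mmul_def by (simp add: sum_subtractf)
  also have "\<dots> = ip n X Y"
    unfolding ip_def using pt by (intro arg_cong[where f = "\<lambda>x. 2 * x"] sum.cong refl) auto
  finally show ?thesis .
qed


definition th :: "nat \<Rightarrow> cmat \<Rightarrow> cmat" where
  "th n A = (\<lambda>a b. sg n a * sg n b * A a b)"

lemma cnj_th: assumes A: "A \<in> su n" and "a \<le> n" "k \<le> n" shows "cnj (th n A a k) = - A k a"
proof -
  have "cnj (th n A a k) = sg n a * sg n k * cnj (A a k)" unfolding th_def by (simp add: cnj_sg)
  also have "cnj (A a k) = - (sg n a * sg n k) * A k a" by (rule su_cnj[OF A assms(2,3)])
  finally show ?thesis by (simp add: sg_def)
qed

lemma sw1: "(\<Sum>a\<in>S. \<Sum>b\<in>S. \<Sum>k\<in>S. (f k a b::real)) = (\<Sum>a\<in>S. \<Sum>b\<in>S. \<Sum>k\<in>S. f a k b)"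
proof -
  have "(\<Sum>a\<in>S. \<Sum>b\<in>S. \<Sum>k\<in>S. f k a b) = (\<Sum>b\<in>S. \<Sum>a\<in>S. \<Sum>k\<in>S. f k a b)" by (rule sum.swap)
  also have "\<dots> = (\<Sum>b\<in>S. \<Sum>k\<in>S. \<Sum>a\<in>S. f k a b)" by (rule sum.cong[OF refl], rule sum.swap)
  also have "\<dots> = (\<Sum>a\<in>S. \<Sum>b\<in>S. \<Sum>k\<in>S. f a k b)" by (rule sum.swap)
  finally show ?thesis .
qed

lemma sw2: "(\<Sum>a\<in>S. \<Sum>b\<in>S. \<Sum>k\<in>S. (f a k b::real)) = (\<Sum>a\<in>S. \<Sum>b\<in>S. \<Sum>k\<in>S. f a b k)"
  by (rule sum.cong[OF refl], rule sum.swap)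

lemma ip_adj: assumes A: "A \<in> su n"
  shows "ip n (bracket n A B) C = - ip n B (bracket n (th n A) C)"
proof -
  define T1 where "T1 = (\<Sum>a\<le>n. \<Sum>b\<le>n. \<Sum>k\<le>n. Re (A a k * B k b * cnj (C a b)))"
  define T2 where "T2 = (\<Sum>a\<le>n. \<Sum>b\<le>n. \<Sum>k\<le>n. Re (B a k * A k b * cnj (C a b)))"
  have L: "(\<Sum>a\<le>n. \<Sum>b\<le>n. Re (bracket n A B a b * cnj (C a b))) = T1 - T2"
  proof -
    have "(\<Sum>a\<le>n. \<Sum>b\<le>n. Re (bracket n A B a b * cnj (C a b))) =
          (\<Sum>a\<le>n. \<Sum>b\<le>n. (\<Sum>k\<le>n. Re (A a k * B k b * cnj (C a b))) - (\<Sum>k\<le>n. Re (B a k * A k b * cnj (C a b))))"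
      by (intro sum.cong refl) (simp add: bracket_entry left_diff_distrib sum_distrib_right)
    then show ?thesis unfolding T1_def T2_def by (simp add: sum_subtractf)
  qed
  have R: "(\<Sum>a\<le>n. \<Sum>b\<le>n. Re (B a b * cnj (bracket n (th n A) C a b))) =
      - (\<Sum>a\<le>n. \<Sum>b\<le>n. \<Sum>k\<le>n. Re (A k a * B a b * cnj (C k b))) + (\<Sum>a\<le>n. \<Sum>b\<le>n. \<Sum>k\<le>n. Re (B a b * A b k * cnj (C a k)))"
  proof -
    have "(\<Sum>a\<le>n. \<Sum>b\<le>n. Re (B a b * cnj (bracket n (th n A) C a b))) =
      (\<Sum>a\<le>n. \<Sum>b\<le>n. - (\<Sum>k\<le>n. Re (A k a * B a b * cnj (C k b))) + (\<Sum>k\<le>n. Re (B a b * A b k * cnj (C a k))))"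
    proof (intro sum.cong refl)
      fix a b assume a: "a \<in> {..n}" and b: "b \<in> {..n}"
      have e1: "(\<Sum>k\<le>n. cnj (th n A a k) * cnj (C k b)) = (\<Sum>k\<le>n. - (A k a * cnj (C k b)))"
        using a by (intro sum.cong refl) (simp add: cnj_th[OF A])
      have e2: "(\<Sum>k\<le>n. cnj (C a k) * cnj (th n A k b)) = (\<Sum>k\<le>n. - (cnj (C a k) * A b k))"
        using b by (intro sum.cong refl) (simp add: cnj_th[OF A])
      have "cnj (bracket n (th n A) C a b) = (\<Sum>k\<le>n. cnj (th n A a k) * cnj (C k b)) - (\<Sum>k\<le>n. cnj (C a k) * cnj (th n A k b))"
        using a b by (simp add: bracket_entry)
      also have "\<dots> = - (\<Sum>k\<le>n. A k a * cnj (C k b)) + (\<Sum>k\<le>n. cnj (C a k) * A b k)"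
        unfolding e1 e2 by (simp add: sum_negf)
      finally have "Re (B a b * cnj (bracket n (th n A) C a b)) = Re (B a b * (- (\<Sum>k\<le>n. A k a * cnj (C k b)) + (\<Sum>k\<le>n. cnj (C a k) * A b k)))"
        by simp
      also have "B a b * (- (\<Sum>k\<le>n. A k a * cnj (C k b)) + (\<Sum>k\<le>n. cnj (C a k) * A b k)) =
          - (\<Sum>k\<le>n. A k a * B a b * cnj (C k b)) + (\<Sum>k\<le>n. B a b * A b k * cnj (C a k))"
        by (simp add: distrib_left right_diff_distrib sum_distrib_left mult_ac)
      also have "Re (- (\<Sum>k\<le>n. A k a * B a b * cnj (C k b)) + (\<Sum>k\<le>n. B a b * A b k * cnj (C a k))) =
          - (\<Sum>k\<le>n. Re (A k a * B a b * cnj (C k b))) + (\<Sum>k\<le>n. Re (B a b * A b k * cnj (C a k)))"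
        by (simp only: plus_complex.sel uminus_complex.sel Re_sum)
      finally show "Re (B a b * cnj (bracket n (th n A) C a b)) = - (\<Sum>k\<le>n. Re (A k a * B a b * cnj (C k b))) + (\<Sum>k\<le>n. Re (B a b * A b k * cnj (C a k)))" .
    qed
    then show ?thesis by (simp only: sum.distrib sum_negf)
  qed
  have s1: "(\<Sum>a\<le>n. \<Sum>b\<le>n. \<Sum>k\<le>n. Re (A k a * B a b * cnj (C k b))) = T1"
    unfolding T1_def by (rule sw1[where f = "\<lambda>x y z. Re (A x y * B y z * cnj (C x z))"])
  have s2: "(\<Sum>a\<le>n. \<Sum>b\<le>n. \<Sum>k\<le>n. Re (B a b * A b k * cnj (C a k))) = T2"
    unfolding T2_def by (rule sw2[where f = "\<lambda>x y z. Re (B x y * A y z * cnj (C x z))", symmetric])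
  show ?thesis unfolding ip_def L R s1 s2 by simp
qed


lemma su_add: assumes A: "A \<in> su n" and B: "B \<in> su n" shows "A + B \<in> su n"
  unfolding su_iff
proof (intro conjI)
  show "supported n (A + B)" using su_supp[OF A] su_supp[OF B] unfolding supported_def by auto
  show "sucond n (A + B)" unfolding sucond_def using su_cnj[OF A] su_cnj[OF B] by (auto simp: sg_def)
  show "(\<Sum>a\<le>n. (A + B) a a) = 0" using su_tr[OF A] su_tr[OF B] by (simp add: sum.distrib)
qed

lemma su_uminus: assumes A: "A \<in> su n" shows "- A \<in> su n"
  unfolding su_iff
proof (intro conjI)
  show "supported n (- A)" using su_supp[OF A] unfolding supported_def by auto
  show "sucond n (- A)" unfolding sucond_def using su_cnj[OF A] by (auto simp: sg_def)
  show "(\<Sum>a\<le>n. (- A) a a) = 0" using su_tr[OF A] by (simp add: sum_negf)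
qed

lemma su_diff: assumes "A \<in> su n" "B \<in> su n" shows "A - B \<in> su n"
  using su_add[OF assms(1) su_uminus[OF assms(2)]] by (simp add: fun_diff_def)

lemma su_smul: assumes A: "A \<in> su n" shows "smul (complex_of_real r) A \<in> su n"
  unfolding su_iff
proof (intro conjI)
  show "supported n (smul (complex_of_real r) A)" using su_supp[OF A] unfolding supported_def smul_def by auto
  show "sucond n (smul (complex_of_real r) A)" unfolding sucond_def smul_def using su_cnj[OF A] by (auto simp: sg_def)
  show "(\<Sum>a\<le>n. smul (complex_of_real r) A a a) = 0" using su_tr[OF A] by (simp add: smul_def sum_distrib_left[symmetric])
qed

lemma su_zero: "0 \<in> su n"
  unfolding su_iff supported_def sucond_def by simp

lemma th_su: assumes A: "A \<in> su n" shows "th n A \<in> su n"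
  unfolding su_iff
proof (intro conjI)
  show "supported n (th n A)" using su_supp[OF A] unfolding supported_def th_def by auto
  show "sucond n (th n A)" unfolding sucond_def th_def
    using su_cnj[OF A] by (auto simp: sg_def)
  have "(\<Sum>a\<le>n. th n A a a) = (\<Sum>a\<le>n. A a a)" by (intro sum.cong refl) (simp add: th_def sg_def)
  then show "(\<Sum>a\<le>n. th n A a a) = 0" using su_tr[OF A] by simp
qed

lemma ip_add: "ip n (A + B) C = ip n A C + ip n B C"
  unfolding ip_def by (simp add: distrib_right sum.distrib)

lemma ip_uminus: "ip n (- A) C = - ip n A C"
proof -
  have t: "\<And>a b. Re ((- A) a b * cnj (C a b)) = - Re (A a b * cnj (C a b))" by simp
  show ?thesis unfolding ip_def t sum_negf by simp
qed

lemma ip_diff: "ip n (A - B) C = ip n A C - ip n B C"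
  unfolding ip_def by (simp add: left_diff_distrib sum_subtractf)

lemma ip_smul: "ip n (smul (complex_of_real r) A) C = r * ip n A C"
proof -
  have t: "\<And>a b. Re (smul (complex_of_real r) A a b * cnj (C a b)) = r * Re (A a b * cnj (C a b))"
    by (simp add: smul_def algebra_simps)
  show ?thesis unfolding ip_def t by (simp add: sum_distrib_left mult_ac)
qed

lemma ip_sym: "ip n A B = ip n B A"
  unfolding ip_def by (simp add: mult.commute)

lemma ip_pos: assumes A: "A \<in> su n" and z: "ip n A A = 0" shows "A = 0"
proof -
  have nn: "\<And>a b. 0 \<le> Re (A a b * cnj (A a b))" by (simp add: complex_mult_cnj)
  have "(\<Sum>a\<le>n. \<Sum>b\<le>n. Re (A a b * cnj (A a b))) = 0" using z unfolding ip_def by simp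
  then have "\<forall>a\<in>{..n}. (\<Sum>b\<le>n. Re (A a b * cnj (A a b))) = 0"
    by (subst (asm) sum_nonneg_eq_0_iff) (auto intro: sum_nonneg nn)
  then have "\<forall>a\<in>{..n}. \<forall>b\<in>{..n}. Re (A a b * cnj (A a b)) = 0"
    by (auto simp: sum_nonneg_eq_0_iff nn)
  then have e: "A a b = 0" if "a \<le> n" "b \<le> n" for a b
    using that by (auto simp: complex_mult_cnj complex_eq_iff sum_power2_eq_zero_iff)
  show ?thesis
  proof (intro ext)
    fix a b show "A a b = 0 a b"
      using e[of a b] su_supp[OF A, of a b] by (cases "a \<le> n \<and> b \<le> n") auto
  qed
qed

lemma bracket_antisym: "bracket n B A = - bracket n A B"
  unfolding bracket_def by simp

definition nab :: "nat \<Rightarrow> cmat \<Rightarrow> cmat \<Rightarrow> cmat" where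
  "nab n X Y = smul (complex_of_real (1/2)) (bracket n X Y + bracket n (th n Y) X + bracket n (th n X) Y)"

lemma nab_su: "X \<in> su n \<Longrightarrow> Y \<in> su n \<Longrightarrow> nab n X Y \<in> su n"
  unfolding nab_def by (intro su_smul su_add bracket_su th_su)

lemma nab_ip: assumes X: "X \<in> su n" and Y: "Y \<in> su n"
  shows "2 * ip n (nab n X Y) W = ip n (bracket n X Y) W - ip n (bracket n Y W) X + ip n (bracket n W X) Y"
proof -
  have "2 * ip n (nab n X Y) W = ip n (bracket n X Y) W + ip n (bracket n (th n Y) X) W + ip n (bracket n (th n X) Y) W"
    unfolding nab_def ip_smul ip_add by simp
  also have "ip n (bracket n (th n Y) X) W = - ip n (bracket n Y W) X"
    using ip_adj[OF Y, of W X] ip_sym[of n W] by simp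
  also have "ip n (bracket n (th n X) Y) W = ip n (bracket n W X) Y"
    using ip_adj[OF X, of W Y] ip_sym[of n W] bracket_antisym[of n W X] ip_uminus by simp
  finally show ?thesis by simp
qed

lemma nabla_eq: assumes X: "X \<in> su n" and Y: "Y \<in> su n" shows "nabla n X Y = nab n X Y"
  unfolding nabla_def
proof (rule the_equality)
  show "nab n X Y \<in> su n \<and> (\<forall>W\<in>su n. 2 * gt n (nab n X Y) W = gt n (bracket n X Y) W - gt n (bracket n Y W) X + gt n (bracket n W X) Y)"
    using nab_su[OF X Y] nab_ip[OF X Y] by (simp add: gt_ip bracket_su X Y)
next
  fix Z assume h: "Z \<in> su n \<and> (\<forall>W\<in>su n. 2 * gt n Z W = gt n (bracket n X Y) W - gt n (bracket n Y W) X + gt n (bracket n W X) Y)"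
  then have Z: "Z \<in> su n" by simp
  have "2 * ip n Z W = 2 * ip n (nab n X Y) W" if W: "W \<in> su n" for W
    using h W nab_ip[OF X Y, of W] by (simp add: gt_ip bracket_su X Y Z)
  then have "ip n (Z - nab n X Y) W = 0" if "W \<in> su n" for W
    using that by (simp add: ip_diff)
  then have "ip n (Z - nab n X Y) (Z - nab n X Y) = 0" using su_diff[OF Z nab_su[OF X Y]] by blast
  then have "Z - nab n X Y = 0" by (rule ip_pos[OF su_diff[OF Z nab_su[OF X Y]]])
  then show "Z = nab n X Y" by simp
qed


lemma mmul_smul_l: "mmul n (smul c A) B = smul c (mmul n A B)"
  unfolding mmul_def smul_def by (auto simp: fun_eq_iff sum_distrib_left mult_ac)

lemma mmul_smul_r: "mmul n A (smul c B) = smul c (mmul n A B)"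
  unfolding mmul_def smul_def by (auto simp: fun_eq_iff sum_distrib_left mult_ac)

lemma bracket_smul_l: "bracket n (smul c A) B = smul c (bracket n A B)"
  unfolding bracket_def mmul_smul_l mmul_smul_r by (simp add: smul_def fun_eq_iff algebra_simps)

lemma bracket_smul_r: "bracket n A (smul c B) = smul c (bracket n A B)"
  unfolding bracket_def mmul_smul_l mmul_smul_r by (simp add: smul_def fun_eq_iff algebra_simps)

lemma bracket_self: "bracket n A A = 0"
  unfolding bracket_def by simp

lemma bracket_zero_r: "bracket n A 0 = 0"
  unfolding bracket_def mmul_def by (simp add: fun_eq_iff)

lemma bracket_zero_l: "bracket n 0 A = 0"
  unfolding bracket_def mmul_def by (simp add: fun_eq_iff)

lemma th_zero: "th n 0 = 0"
  unfolding th_def by (simp add: fun_eq_iff)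

lemma th_smul: "th n (smul c A) = smul c (th n A)"
  unfolding th_def smul_def by (simp add: fun_eq_iff mult_ac)

lemma th_mmul: "th n (mmul n A B) = mmul n (th n A) (th n B)"
proof (intro ext)
  fix a b
  have "(\<Sum>k\<le>n. sg n a * sg n k * A a k * (sg n k * sg n b * B k b)) = (\<Sum>k\<le>n. sg n a * sg n b * (A a k * B k b))"
    by (intro sum.cong refl) (simp add: sg_def)
  then show "th n (mmul n A B) a b = mmul n (th n A) (th n B) a b"
    unfolding th_def mmul_def by (simp add: sum_distrib_left)
qed

lemma th_bracket: "th n (bracket n A B) = bracket n (th n A) (th n B)"
proof -
  have "th n (bracket n A B) = th n (mmul n A B) - th n (mmul n B A)"
    unfolding bracket_def th_def by (simp add: fun_eq_iff algebra_simps)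
  then show ?thesis unfolding th_mmul bracket_def .
qed

lemma nab_self: assumes "th n Y = smul (complex_of_real d) Y" shows "nab n Y Y = 0"
  unfolding nab_def assms bracket_smul_l bracket_self by (simp add: smul_def fun_eq_iff)

lemma nab_zero: "nab n X 0 = 0"
  unfolding nab_def bracket_zero_r bracket_zero_l th_zero by (simp add: smul_def fun_eq_iff)

lemma curv_formula:
  assumes X: "X \<in> su n" and Y: "Y \<in> su n"
    and tX: "th n X = smul (complex_of_real e) X" and tY: "th n Y = smul (complex_of_real d) Y"
  shows "gt n (curv n X Y Y) X =
    (- ((1 - d + e) / 2) * (1 - e * d + d) / 2 - (- 1 + d - e * d) / 2) * d * ip n (bracket n X Y) (bracket n X Y)"
proof -
  define Z where "Z = bracket n X Y"
  define W where "W = bracket n Y Z"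
  define c where "c = (1 - d + e) / 2"
  have Z: "Z \<in> su n" unfolding Z_def by (rule bracket_su[OF X Y])
  have YX: "bracket n Y X = - Z" unfolding Z_def by (rule bracket_antisym)
  have ZY: "bracket n Z Y = - W" unfolding W_def by (rule bracket_antisym)
  have tZ: "th n Z = smul (complex_of_real (e * d)) Z"
    unfolding Z_def th_bracket tX tY bracket_smul_l bracket_smul_r by (simp add: smul_def fun_eq_iff)
  have n1: "nabla n Y Y = 0" unfolding nabla_eq[OF Y Y] by (rule nab_self[OF tY])
  have n2: "nabla n X 0 = 0" unfolding nabla_eq[OF X su_zero] by (rule nab_zero)
  have n3: "nabla n X Y = smul (complex_of_real c) Z"
    unfolding nabla_eq[OF X Y] nab_def tX tY bracket_smul_l YX c_def
    by (simp add: Z_def[symmetric] smul_def fun_eq_iff algebra_simps)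
  have cZ: "smul (complex_of_real c) Z \<in> su n" by (rule su_smul[OF Z])
  have n4: "nabla n Y (smul (complex_of_real c) Z) = smul (complex_of_real (c * (1 - e * d + d) / 2)) W"
    unfolding nabla_eq[OF Y cZ] nab_def th_smul tZ tY bracket_smul_l bracket_smul_r ZY
    by (simp add: W_def[symmetric] smul_def fun_eq_iff algebra_simps)
  have n5: "nabla n Z Y = smul (complex_of_real ((- 1 + d - e * d) / 2)) W"
    unfolding nabla_eq[OF Z Y] nab_def tZ tY bracket_smul_l bracket_smul_r ZY
    by (simp add: W_def[symmetric] smul_def fun_eq_iff algebra_simps)
  have cv: "curv n X Y Y = smul (complex_of_real (- (c * (1 - e * d + d) / 2) - (- 1 + d - e * d) / 2)) W"
    unfolding curv_def n1 n2 n3 n4 Z_def[symmetric] n5 by (simp add: smul_def fun_eq_iff algebra_simps)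
  have W: "W \<in> su n" unfolding W_def by (rule bracket_su[OF Y Z])
  have "ip n W X = - ip n Z (bracket n (th n Y) X)" unfolding W_def by (rule ip_adj[OF Y])
  also have "bracket n (th n Y) X = smul (complex_of_real (- d)) Z"
    unfolding tY bracket_smul_l YX by (simp add: smul_def fun_eq_iff)
  also have "ip n Z (smul (complex_of_real (- d)) Z) = - d * ip n Z Z"
    by (subst ip_sym) (rule ip_smul)
  finally have iW: "ip n W X = d * ip n Z Z" by simp
  have "gt n (curv n X Y Y) X = ip n (curv n X Y Y) X"
    unfolding cv by (rule gt_ip[OF su_smul[OF W] X])
  also have "\<dots> = (- (c * (1 - e * d + d) / 2) - (- 1 + d - e * d) / 2) * (d * ip n Z Z)"
    unfolding cv ip_smul iW ..
  finally show ?thesis unfolding c_def Z_def by (simp add: algebra_simps)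
qed


lemma th_bas: assumes "i \<in> idx n"
  shows "th n (bas n i) = smul (complex_of_real (if i \<in> idxp n then -1 else 1)) (bas n i)"
proof -
  obtain a b t where i: "i = (a,b,t)" by (cases i) auto
  have "a < b \<and> b \<le> n \<or> a = b \<and> a < n \<and> t" using assms unfolding i idx_def by auto
  then show ?thesis
    unfolding i th_def smul_def bas_def idxp_def off_def hd_def sg_def
    by (auto simp: fun_eq_iff)
qed

lemma dd: "(\<Sum>x\<le>(n::nat). \<Sum>y\<le>n. (if x = a \<and> y = b then f x y else 0 :: real)) = (if a \<le> n \<and> b \<le> n then f a b else 0)"
proof -
  have "(\<Sum>x\<le>n. \<Sum>y\<le>n. (if x = a \<and> y = b then f x y else 0 :: real)) = (\<Sum>x\<le>n. if x = a then (if b \<le> n then f a b else 0) else 0)"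
    by (intro sum.cong refl) (auto simp: sum.delta)
  then show ?thesis by (simp add: sum.delta)
qed

lemma ip_off: assumes "a < b" "b \<le> n"
  shows "ip n (off n a b u) Q = 2 * (Re (u * cnj (Q a b)) + Re ((- sg n b * cnj u) * cnj (Q b a)))"
proof -
  have "(\<Sum>x\<le>n. \<Sum>y\<le>n. Re (off n a b u x y * cnj (Q x y))) =
     (\<Sum>x\<le>n. \<Sum>y\<le>n. (if x = a \<and> y = b then Re (u * cnj (Q x y)) else 0) + (if x = b \<and> y = a then Re ((- sg n b * cnj u) * cnj (Q x y)) else 0))"
    using assms by (intro sum.cong refl) (auto simp: off_split algebra_simps)
  also have "\<dots> = Re (u * cnj (Q a b)) + Re ((- sg n b * cnj u) * cnj (Q b a))"
    using assms by (simp only: sum.distrib dd) simp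
  finally show ?thesis unfolding ip_def by simp
qed

lemma ip_hd: assumes "a < n"
  shows "ip n (hd n a) Q = 2 * (Re (\<i> * cnj (Q a a)) + Re ((- \<i>) * cnj (Q n n)))"
proof -
  have "(\<Sum>x\<le>n. \<Sum>y\<le>n. Re (hd n a x y * cnj (Q x y))) =
     (\<Sum>x\<le>n. \<Sum>y\<le>n. (if x = a \<and> y = a then Re (\<i> * cnj (Q x y)) else 0) + (if x = n \<and> y = n then Re ((- \<i>) * cnj (Q x y)) else 0))"
    using assms by (intro sum.cong refl) (auto simp: hd_split)
  also have "\<dots> = Re (\<i> * cnj (Q a a)) + Re ((- \<i>) * cnj (Q n n))"
    using assms by (simp only: sum.distrib dd) simp
  finally show ?thesis unfolding ip_def by simp
qed

lemma ip_bas: assumes i: "i \<in> idx n" and j: "j \<in> idx n"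
  shows "ip n (bas n i) (bas n j) =
    (if i = j then 4 else if fst i = fst (snd i) \<and> fst j = fst (snd j) then 2 else 0)"
proof -
  obtain a b t where ie: "i = (a,b,t)" by (cases i) auto
  obtain c d s where je: "j = (c,d,s)" by (cases j) auto
  have I: "a < b \<and> b \<le> n \<or> a = b \<and> a < n \<and> t" using i unfolding ie idx_def by auto
  have J: "c < d \<and> d \<le> n \<or> c = d \<and> c < n \<and> s" using j unfolding je idx_def by auto
  show ?thesis
  proof (cases "a = b")
    case True
    then have an: "a < n" "t" using I by auto
    have "bas n i = hd n a" unfolding ie bas_def using True by simp
    then have "ip n (bas n i) (bas n j) = 2 * (Re (\<i> * cnj (bas n j a a)) + Re ((- \<i>) * cnj (bas n j n n)))"
      using ip_hd[OF an(1)] by simp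
    also have "\<dots> = (if i = j then 4 else if fst i = fst (snd i) \<and> fst j = fst (snd j) then 2 else 0)"
      using J an True unfolding ie je bas_def hd_def off_def by (cases "c = d") auto
    finally show ?thesis .
  next
    case False
    then have ab: "a < b" "b \<le> n" using I by auto
    have "bas n i = off n a b (tv t)" unfolding ie bas_def using False by simp
    then have "ip n (bas n i) (bas n j) = 2 * (Re (tv t * cnj (bas n j a b)) + Re ((- sg n b * cnj (tv t)) * cnj (bas n j b a)))"
      using ip_off[OF ab] by simp
    also have "\<dots> = (if i = j then 4 else if fst i = fst (snd i) \<and> fst j = fst (snd j) then 2 else 0)"
      using J ab False unfolding ie je bas_def hd_def off_def tv_def sg_def by (cases "c = d"; cases t; cases s) auto
    finally show ?thesis .
  qed
qed

lemma diag_comm: assumes "\<And>x y. x \<noteq> y \<Longrightarrow> A x y = 0" "\<And>x y. x \<noteq> y \<Longrightarrow> B x y = 0"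
  shows "bracket n A B = 0"
proof -
  have m: "mmul n A B x y = (if x \<le> n \<and> y \<le> n \<and> x = y then A x x * B x x else 0)"
    if "\<And>x y. x \<noteq> y \<Longrightarrow> A x y = 0" "\<And>x y. x \<noteq> y \<Longrightarrow> B x y = 0" for A B :: cmat and x y
  proof -
    have "(\<Sum>k\<le>n. A x k * B k y) = (\<Sum>k\<le>n. if k = x then A x x * B x y else 0)"
      by (intro sum.cong refl) (auto simp: that)
    then show ?thesis unfolding mmul_def using that by (auto simp: sum.delta)
  qed
  show ?thesis unfolding bracket_def
    by (simp add: fun_eq_iff m[of A B, OF assms] m[of B A, OF assms(2,1)] mult.commute)
qed

lemma bracket_diag: assumes "a < n" "c < n"
  shows "bracket n (hd n a) (hd n c) = 0"
  by (rule diag_comm) (auto simp: hd_def)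

definition nsq :: "nat \<Rightarrow> cmat \<Rightarrow> real" where
  "nsq n Q = (\<Sum>x\<le>n. \<Sum>y\<le>n. (cmod (Q x y))\<^sup>2)"

lemma ip_nsq: "ip n Q Q = 2 * nsq n Q"
proof -
  have "\<And>z. Re (z * cnj z) = (cmod z)\<^sup>2" by (simp add: complex_mult_cnj cmod_power2)
  then show ?thesis unfolding ip_def nsq_def by simp
qed

lemma real_par: "((x::real) - y)\<^sup>2 \<le> 2 * x\<^sup>2 + 2 * y\<^sup>2"
proof -
  have "0 \<le> (x + y)\<^sup>2" by simp
  then show ?thesis by (simp add: power2_eq_square algebra_simps)
qed

lemma nsq_diff: "nsq n (A - B) \<le> 2 * nsq n A + 2 * nsq n B"
proof -
  have "(cmod (A x y - B x y))\<^sup>2 \<le> 2 * (cmod (A x y))\<^sup>2 + 2 * (cmod (B x y))\<^sup>2" for x y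
    using real_par[of "Re (A x y)" "Re (B x y)"] real_par[of "Im (A x y)" "Im (B x y)"]
    by (simp add: cmod_power2)
  then have "nsq n (A - B) \<le> (\<Sum>x\<le>n. \<Sum>y\<le>n. 2 * (cmod (A x y))\<^sup>2 + 2 * (cmod (B x y))\<^sup>2)"
    unfolding nsq_def by (intro sum_mono) simp
  also have "\<dots> = 2 * nsq n A + 2 * nsq n B"
    unfolding nsq_def by (simp add: sum.distrib sum_distrib_left)
  finally show ?thesis .
qed

lemma two_le_sum: assumes "a \<noteq> b" "a \<le> n" "b \<le> (n::nat)" "\<And>x. 0 \<le> f x"
  shows "f a + f b \<le> (\<Sum>x\<le>n. (f x :: real))"
proof -
  have "f a + f b = sum f {a, b}" using assms(1) by simp
  also have "\<dots> \<le> sum f {..n}" using assms by (intro sum_mono2) auto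
  finally show ?thesis .
qed

lemma two_delta: assumes "a \<noteq> b" "a \<le> n" "b \<le> (n::nat)"
  shows "(\<Sum>x\<le>n. (cmod ((if x = a then p else 0) + (if x = b then q else 0)))\<^sup>2) = (cmod p)\<^sup>2 + (cmod q)\<^sup>2"
proof -
  have "(\<Sum>x\<le>n. (cmod ((if x = a then p else 0) + (if x = b then q else 0)))\<^sup>2)
      = (\<Sum>x\<le>n. (if x = a then (cmod p)\<^sup>2 else 0) + (if x = b then (cmod q)\<^sup>2 else 0))"
    using assms by (intro sum.cong refl) auto
  also have "\<dots> = (cmod p)\<^sup>2 + (cmod q)\<^sup>2" using assms by (simp add: sum.distrib)
  finally show ?thesis .
qed

lemma nsq_rows:
  assumes ab: "a \<noteq> b" "a \<le> n" "b \<le> n" and ab': "a' \<noteq> b'" "a' \<le> n" "b' \<le> n"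
    and al: "cmod \<alpha> = 1" and be: "cmod \<beta> = 1"
    and M: "\<And>x y. x \<le> n \<Longrightarrow> y \<le> n \<Longrightarrow> M x y = (if x = a then \<alpha> * Q a' y else 0) + (if x = b then \<beta> * Q b' y else 0)"
  shows "nsq n M \<le> nsq n Q"
proof -
  have "nsq n M = (\<Sum>y\<le>n. \<Sum>x\<le>n. (cmod (M x y))\<^sup>2)" unfolding nsq_def by (rule sum.swap)
  also have "\<dots> = (\<Sum>y\<le>n. (cmod (Q a' y))\<^sup>2 + (cmod (Q b' y))\<^sup>2)"
  proof (intro sum.cong refl)
    fix y assume y: "y \<in> {..n}"
    have "(\<Sum>x\<le>n. (cmod (M x y))\<^sup>2) = (\<Sum>x\<le>n. (cmod ((if x = a then \<alpha> * Q a' y else 0) + (if x = b then \<beta> * Q b' y else 0)))\<^sup>2)"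
      using y by (intro sum.cong refl) (simp add: M)
    also have "\<dots> = (cmod (Q a' y))\<^sup>2 + (cmod (Q b' y))\<^sup>2"
      using two_delta[OF ab] al be by (simp add: norm_mult)
    finally show "(\<Sum>x\<le>n. (cmod (M x y))\<^sup>2) = (cmod (Q a' y))\<^sup>2 + (cmod (Q b' y))\<^sup>2" .
  qed
  also have "\<dots> \<le> (\<Sum>y\<le>n. \<Sum>x\<le>n. (cmod (Q x y))\<^sup>2)"
    by (intro sum_mono two_le_sum[OF ab']) simp
  also have "\<dots> = nsq n Q" unfolding nsq_def by (rule sum.swap)
  finally show ?thesis .
qed

lemma nsq_cols:
  assumes ab: "a \<noteq> b" "a \<le> n" "b \<le> n" and ab': "a' \<noteq> b'" "a' \<le> n" "b' \<le> n"
    and al: "cmod \<alpha> = 1" and be: "cmod \<beta> = 1"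
    and M: "\<And>x y. x \<le> n \<Longrightarrow> y \<le> n \<Longrightarrow> M x y = (if y = a then \<alpha> * Q x a' else 0) + (if y = b then \<beta> * Q x b' else 0)"
  shows "nsq n M \<le> nsq n Q"
proof -
  have "nsq n M = (\<Sum>x\<le>n. (cmod (Q x a'))\<^sup>2 + (cmod (Q x b'))\<^sup>2)"
    unfolding nsq_def
  proof (intro sum.cong refl)
    fix x assume x: "x \<in> {..n}"
    have "(\<Sum>y\<le>n. (cmod (M x y))\<^sup>2) = (\<Sum>y\<le>n. (cmod ((if y = a then \<alpha> * Q x a' else 0) + (if y = b then \<beta> * Q x b' else 0)))\<^sup>2)"
      using x by (intro sum.cong refl) (simp add: M)
    also have "\<dots> = (cmod (Q x a'))\<^sup>2 + (cmod (Q x b'))\<^sup>2"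
      using two_delta[OF ab] al be by (simp add: norm_mult)
    finally show "(\<Sum>y\<le>n. (cmod (M x y))\<^sup>2) = (cmod (Q x a'))\<^sup>2 + (cmod (Q x b'))\<^sup>2" .
  qed
  also have "\<dots> \<le> nsq n Q"
    unfolding nsq_def by (intro sum_mono two_le_sum[OF ab']) simp
  finally show ?thesis .
qed

lemma cmod_tv: "cmod (tv t) = 1"
  by (simp add: tv_def)

lemma cmod_v: "cmod (- sg n b * cnj u) = cmod u"
  by (simp add: sg_def norm_mult)

lemma norm_sg: "cmod (sg n b) = 1"
  by (simp add: sg_def)

lemma cmod_v2: "cmod (sg n b * cnj u) = cmod u"
  by (simp add: sg_def norm_mult)

lemma nsq_left: assumes i: "i \<in> idx n" shows "nsq n (mmul n (bas n i) Q) \<le> nsq n Q"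
proof -
  obtain a b t where ie: "i = (a,b,t)" by (cases i) auto
  have I: "a < b \<and> b \<le> n \<or> a = b \<and> a < n \<and> t" using i unfolding ie idx_def by auto
  show ?thesis
  proof (cases "a = b")
    case True
    then have an: "a < n" using I by auto
    have e: "bas n i = hd n a" unfolding ie bas_def using True by simp
    show ?thesis unfolding e
      apply (rule nsq_rows[of a n n a n "\<i>" "- \<i>"])
      using an apply (auto simp: mmul_hd_l)
      done
  next
    case False
    then have ab: "a < b" "b \<le> n" using I by auto
    have e: "bas n i = off n a b (tv t)" unfolding ie bas_def using False by simp
    show ?thesis unfolding e
      apply (rule nsq_rows[of a b n b a "tv t" "- sg n b * cnj (tv t)"])
      using ab apply (auto simp: mmul_off_l cmod_tv cmod_v cmod_v2)
      done
  qed
qed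

lemma nsq_right: assumes i: "i \<in> idx n" shows "nsq n (mmul n Q (bas n i)) \<le> nsq n Q"
proof -
  obtain a b t where ie: "i = (a,b,t)" by (cases i) auto
  have I: "a < b \<and> b \<le> n \<or> a = b \<and> a < n \<and> t" using i unfolding ie idx_def by auto
  show ?thesis
  proof (cases "a = b")
    case True
    then have an: "a < n" using I by auto
    have e: "bas n i = hd n a" unfolding ie bas_def using True by simp
    show ?thesis unfolding e
      apply (rule nsq_cols[of a n n a n "\<i>" "- \<i>"])
      using an apply (auto simp: mmul_hd_r mult.commute)
      done
  next
    case False
    then have ab: "a < b" "b \<le> n" using I by auto
    have e: "bas n i = off n a b (tv t)" unfolding ie bas_def using False by simp
    show ?thesis unfolding e
      apply (rule nsq_cols[of b a n a b "tv t" "- sg n b * cnj (tv t)"])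
      using ab apply (auto simp: mmul_off_r cmod_tv cmod_v cmod_v2 mult.commute norm_mult norm_sg)
      done
  qed
qed

lemma ip_bracket_bound: assumes i: "i \<in> idx n" and j: "j \<in> idx n"
  shows "ip n (bracket n (bas n i) (bas n j)) (bracket n (bas n i) (bas n j)) \<le> 16"
proof -
  have nY: "nsq n (bas n j) = 2" using ip_bas[OF j j] ip_nsq[of n "bas n j"] by simp
  have "nsq n (bracket n (bas n i) (bas n j)) \<le> 2 * nsq n (mmul n (bas n i) (bas n j)) + 2 * nsq n (mmul n (bas n j) (bas n i))"
    unfolding bracket_def by (rule nsq_diff)
  also have "\<dots> \<le> 2 * nsq n (bas n j) + 2 * nsq n (bas n j)"
    using nsq_left[OF i, of "bas n j"] nsq_right[OF i, of "bas n j"] by simp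
  finally show ?thesis unfolding ip_nsq nY by simp
qed

lemma K_cases: assumes "e = 1 \<or> e = -1" "d = 1 \<or> d = (-1::real)"
  shows "(- ((1 - d + e) / 2) * (1 - e * d + d) / 2 - (- 1 + d - e * d) / 2) * d = 1/4 \<or>
         (- ((1 - d + e) / 2) * (1 - e * d + d) / 2 - (- 1 + d - e * d) / 2) * d = -7/4"
  using assms by auto

theorem proposition3p8:
  fixes n :: nat and X Y :: cmat
  assumes "1 \<le> n"
    and "X \<in> std_basis n" and "Y \<in> std_basis n" and "X \<noteq> Y"
  shows "sec_curv n X Y \<le> 1 / 4"
proof -
  obtain i where i: "i \<in> idx n" and Xi: "X = bas n i" using assms(2) unfolding std_eq by auto
  obtain j where j: "j \<in> idx n" and Yj: "Y = bas n j" using assms(3) unfolding std_eq by auto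
  have ij: "i \<noteq> j" using assms(4) Xi Yj by auto
  define e :: real where "e = (if i \<in> idxp n then -1 else 1)"
  define d :: real where "d = (if j \<in> idxp n then -1 else 1)"
  have X: "X \<in> su n" unfolding Xi by (rule bas_su[OF i])
  have Y: "Y \<in> su n" unfolding Yj by (rule bas_su[OF j])
  have tX: "th n X = smul (complex_of_real e) X" unfolding Xi e_def by (rule th_bas[OF i])
  have tY: "th n Y = smul (complex_of_real d) Y" unfolding Yj d_def by (rule th_bas[OF j])
  define K where "K = (- ((1 - d + e) / 2) * (1 - e * d + d) / 2 - (- 1 + d - e * d) / 2) * d"
  define q where "q = ip n (bracket n X Y) (bracket n X Y)"
  have K: "K = 1/4 \<or> K = -7/4" unfolding K_def by (rule K_cases) (simp_all add: e_def d_def)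
  have q0: "0 \<le> q" unfolding q_def ip_nsq nsq_def by (simp add: sum_nonneg)
  have q16: "q \<le> 16" unfolding q_def Xi Yj by (rule ip_bracket_bound[OF i j])
  have num: "gt n (curv n X Y Y) X = K * q"
    unfolding curv_formula[OF X Y tX tY] K_def q_def by simp
  have gXX: "gt n X X = 4" using gt_ip[OF X X] ip_bas[OF i i] unfolding Xi by simp
  have gYY: "gt n Y Y = 4" using gt_ip[OF Y Y] ip_bas[OF j j] unfolding Yj by simp
  have sc: "sec_curv n X Y = K * q / (16 - (gt n X Y)\<^sup>2)"
    unfolding sec_curv_def num gXX gYY by simp
  show ?thesis
  proof (cases "fst i = fst (snd i) \<and> fst j = fst (snd j)")
    case True
    obtain a b t where ie: "i = (a,b,t)" by (cases i) auto
    obtain c c' s where je: "j = (c,c',s)" by (cases j) auto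
    have a: "a = b" "a < n" using True i unfolding ie idx_def by auto
    have c: "c = c'" "c < n" using True j unfolding je idx_def by auto
    have "bracket n X Y = 0" unfolding Xi Yj ie je bas_def using a c bracket_diag by simp
    then have "q = 0" unfolding q_def ip_def by simp
    then show ?thesis unfolding sc by simp
  next
    case False
    then have "gt n X Y = 0" using gt_ip[OF X Y] ip_bas[OF i j] ij unfolding Xi Yj by simp
    then have s16: "sec_curv n X Y = K * q / 16" unfolding sc by simp
    from K show ?thesis
    proof
      assume kk: "K = 1/4" show ?thesis using s16[unfolded kk] q16 by simp
    next
      assume kk: "K = -7/4" show ?thesis using s16[unfolded kk] q0 by simp
    qed
  qed
qed


end
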